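(* For all integers $t\ge2$, $x\ge0$, $l\ge1$, $k\ge0$, $$f(t,x,l,k)=\sum_{k'=1}^{k}\binom{k}{k'}\,\tilde f(t,x,l,k')\,g(t-2,x+l,k-k',x).$$
   Context: Fix a positive integer $\omega$; all graphs counted are labeled, connected, chordal and $\omega$-colorable (proper coloring with at most $\omega$ colors). $[n]=\{1,\dots,n\}$, $[0]=\emptyset$, $[a,b]=\{a,\dots,b\}$. A vertex is simplicial if its neighborhood is a clique. For a chordal graph $G$ and a clique $X\subseteq V(G)$, the evaporation sequence of $G$ with exception set $X$ is: empty if $X=V(G)$; otherwise $L_1$ (the set of simplicial vertices of $G$ not in $X$, always nonempty) followed by the evaporation sequence of $G-L_1$ with exception set $X$. If it is $L_1,\dots,L_t$, $G$ evaporates at time $t$ and $L_G(X):=L_t$; a nonempty $S\subseteq V(G)\setminus X$ evaporates at time $\max\{i:L_i\cap S\ne\emptyset\}$. For a clique $Y=[y]$ ($y\ge1$) and $0\le z<y$: $g(s,y,k,z)$ is the number of connected $\omega$-colorable chordal graphs $G$ with vertex set $[y+k]$ in which $Y$ is a clique, $G$ evaporates at time at most $s$ with exception set $Y$, and every connected component of $G\setminus Y$ has a neighbor in $Y\setminus[z]$. With $X=[x]$: $f(t,x,l,k)$ is the number of connected $\omega$-colorable chordal graphs $G$ with vertex set $[x+l+k]$ in which $X$ is a clique, $G$ evaporates at time exactly $t$ with exception set $X$, $G\setminus X$ is connected, $L_G(X)=[x+1,x+l]$, and $X\cup L_G(X)$ is a clique. $\tilde f(t,x,l,k)$ is the number of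 graphs counted by $f(t,x,l,k)$ that additionally satisfy: $X\cup L_G(X)\subsetneq V(G)$ and every connected component of $G\setminus(X\cup L_G(X))$ evaporates at time exactly $t-1$ in $G$ with exception set $X$. *)

theory Defs
  imports Main
begin

text \<open>Simple labeled graphs: an edge set E of 2-element subsets; vertex set given separately.\<close>

definition all_edges :: "nat \<Rightarrow> nat set set" where
  "all_edges n = {e. \<exists>u v. e = {u, v} \<and> u \<noteq> v \<and> u \<in> {1..n} \<and> v \<in> {1..n}}"

definition adj :: "nat set set \<Rightarrow> nat \<Rightarrow> nat \<Rightarrow> bool" where
  "adj E u v \<longleftrightarrow> u \<noteq> v \<and> {u, v} \<in> E"

definition is_clique :: "nat set set \<Rightarrow> nat set \<Rightarrow> bool" where
  "is_clique E S \<longleftrightarrow> (\<forall>u\<in>S. \<forall>v\<in>S. u \<noteq> v \<longrightarrow> adj E u v)"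

definition adj_rel :: "nat set set \<Rightarrow> nat set \<Rightarrow> (nat \<times> nat) set" where
  "adj_rel E W = {(a, b). a \<in> W \<and> b \<in> W \<and> adj E a b}"

definition connected_on :: "nat set set \<Rightarrow> nat set \<Rightarrow> bool" where
  "connected_on E W \<longleftrightarrow> W \<noteq> {} \<and> (\<forall>u\<in>W. \<forall>v\<in>W. (u, v) \<in> (adj_rel E W)\<^sup>*)"

definition component :: "nat set set \<Rightarrow> nat set \<Rightarrow> nat \<Rightarrow> nat set" where
  "component E W v = {u \<in> W. (v, u) \<in> (adj_rel E W)\<^sup>*}"

definition components :: "nat set set \<Rightarrow> nat set \<Rightarrow> nat set set" where
  "components E W = component E W ` W"

definition chordal_on :: "nat set set \<Rightarrow> nat set \<Rightarrow> bool" where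
  "chordal_on E V \<longleftrightarrow>
     (\<forall>cs. distinct cs \<and> length cs \<ge> 4 \<and> set cs \<subseteq> V \<and>
        (\<forall>i < length cs. adj E (cs ! i) (cs ! ((i + 1) mod length cs)))
      \<longrightarrow> (\<exists>i < length cs. \<exists>j < length cs. i \<noteq> j \<and> j \<noteq> (i + 1) mod length cs
             \<and> i \<noteq> (j + 1) mod length cs \<and> adj E (cs ! i) (cs ! j)))"

definition colorable_on :: "nat \<Rightarrow> nat set set \<Rightarrow> nat set \<Rightarrow> bool" where
  "colorable_on \<omega> E V \<longleftrightarrow>
     (\<exists>c :: nat \<Rightarrow> nat. (\<forall>v\<in>V. c v < \<omega>) \<and> (\<forall>u\<in>V. \<forall>v\<in>V. adj E u v \<longrightarrow> c u \<noteq> c v))"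

definition good_graph :: "nat \<Rightarrow> nat \<Rightarrow> nat set set \<Rightarrow> bool" where
  "good_graph \<omega> n E \<longleftrightarrow> E \<subseteq> all_edges n \<and> connected_on E {1..n}
     \<and> chordal_on E {1..n} \<and> colorable_on \<omega> E {1..n}"

definition simplicial :: "nat set set \<Rightarrow> nat set \<Rightarrow> nat \<Rightarrow> bool" where
  "simplicial E W v \<longleftrightarrow> v \<in> W \<and> is_clique E {u \<in> W. adj E u v}"

fun remain :: "nat set set \<Rightarrow> nat set \<Rightarrow> nat set \<Rightarrow> nat \<Rightarrow> nat set" where
  "remain E X V 0 = V"
| "remain E X V (Suc i) =
     remain E X V i - {v \<in> remain E X V i - X. simplicial E (remain E X V i) v}"

text \<open>The i-th layer L_i (for i \<ge> 1).\<close>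
definition layer :: "nat set set \<Rightarrow> nat set \<Rightarrow> nat set \<Rightarrow> nat \<Rightarrow> nat set" where
  "layer E X V i = remain E X V (i - 1) - remain E X V i"

definition evap_time :: "nat set set \<Rightarrow> nat set \<Rightarrow> nat set \<Rightarrow> nat \<Rightarrow> bool" where
  "evap_time E X V t \<longleftrightarrow> remain E X V t = X \<and> (\<forall>i<t. remain E X V i \<noteq> X)"

definition set_evap_time :: "nat set set \<Rightarrow> nat set \<Rightarrow> nat set \<Rightarrow> nat set \<Rightarrow> nat \<Rightarrow> bool" where
  "set_evap_time E X V S t \<longleftrightarrow> t \<ge> 1 \<and> layer E X V t \<inter> S \<noteq> {}
     \<and> (\<forall>j>t. layer E X V j \<inter> S = {})"

definition g_count :: "nat \<Rightarrow> nat \<Rightarrow> nat \<Rightarrow> nat \<Rightarrow> nat \<Rightarrow> nat" where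
  "g_count \<omega> s y k z = card {E. good_graph \<omega> (y + k) E \<and> is_clique E {1..y}
     \<and> (\<exists>t \<le> s. evap_time E {1..y} {1..y + k} t)
     \<and> (\<forall>C \<in> components E ({1..y + k} - {1..y}).
          \<exists>u\<in>C. \<exists>w \<in> {1..y} - {1..z}. adj E u w)}"

definition f_count :: "nat \<Rightarrow> nat \<Rightarrow> nat \<Rightarrow> nat \<Rightarrow> nat \<Rightarrow> nat" where
  "f_count \<omega> t x l k = card {E. good_graph \<omega> (x + l + k) E \<and> is_clique E {1..x}
     \<and> evap_time E {1..x} {1..x + l + k} t
     \<and> connected_on E ({1..x + l + k} - {1..x})
     \<and> layer E {1..x} {1..x + l + k} t = {x + 1..x + l}
     \<and> is_clique E ({1..x} \<union> {x + 1..x + l})}"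

definition ftilde_count :: "nat \<Rightarrow> nat \<Rightarrow> nat \<Rightarrow> nat \<Rightarrow> nat \<Rightarrow> nat" where
  "ftilde_count \<omega> t x l k = card {E. good_graph \<omega> (x + l + k) E \<and> is_clique E {1..x}
     \<and> evap_time E {1..x} {1..x + l + k} t
     \<and> connected_on E ({1..x + l + k} - {1..x})
     \<and> layer E {1..x} {1..x + l + k} t = {x + 1..x + l}
     \<and> is_clique E ({1..x} \<union> {x + 1..x + l})
     \<and> {1..x} \<union> {x + 1..x + l} \<subset> {1..x + l + k}
     \<and> (\<forall>C \<in> components E ({1..x + l + k} - ({1..x} \<union> {x + 1..x + l})).
          set_evap_time E {1..x} {1..x + l + k} C (t - 1))}"

end

theory Submission
  imports Defs
begin

definition edges :: "nat set \<Rightarrow> nat set set" where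
  "edges V = {e. \<exists>u v. e = {u, v} \<and> u \<noteq> v \<and> u \<in> V \<and> v \<in> V}"

lemma all_edges_eq: "all_edges n = edges {1..n}"
  by (simp add: all_edges_def edges_def)

lemma edges_mono: "A \<subseteq> B \<Longrightarrow> edges A \<subseteq> edges B"
  unfolding edges_def by blast

lemma finite_edges: "finite V \<Longrightarrow> finite (edges V)"
proof -
  assume "finite V"
  have "edges V \<subseteq> Pow V" unfolding edges_def by auto
  then show ?thesis using \<open>finite V\<close> finite_subset by blast
qed

lemma adj_sym: "adj E u v = adj E v u"
  unfolding adj_def by (auto simp: insert_commute)

lemma adj_in_edges: "E \<subseteq> edges V \<Longrightarrow> adj E u v \<Longrightarrow> u \<in> V \<and> v \<in> V"
  unfolding adj_def edges_def by (auto simp: doubleton_eq_iff)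

definition restr :: "nat set set \<Rightarrow> nat set \<Rightarrow> nat set set" where
  "restr E W = {e\<in>E. e \<subseteq> W}"

lemma adj_restr: "adj (restr E W) u v \<longleftrightarrow> adj E u v \<and> u \<in> W \<and> v \<in> W"
  unfolding adj_def restr_def by auto

lemma restr_edges: "E \<subseteq> edges V \<Longrightarrow> restr E W \<subseteq> edges (V \<inter> W)"
  unfolding restr_def edges_def by (auto 0 4)

lemma adj_Un: "adj (A \<union> B) u v \<longleftrightarrow> adj A u v \<or> adj B u v"
  unfolding adj_def by auto

lemma adj_mono: "A \<subseteq> B \<Longrightarrow> adj A u v \<Longrightarrow> adj B u v"
  unfolding adj_def by auto

lemma is_clique_subset: "is_clique E S \<Longrightarrow> T \<subseteq> S \<Longrightarrow> is_clique E T"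
  unfolding is_clique_def by blast

lemma remain_subset: "remain E X V i \<subseteq> V"
  by (induction i) auto

lemma remain_Suc_subset: "remain E X V (Suc i) \<subseteq> remain E X V i"
  by auto

lemma remain_antimono: "i \<le> j \<Longrightarrow> remain E X V j \<subseteq> remain E X V i"
proof (induction j)
  case 0 then show ?case by simp
next
  case (Suc j)
  then show ?case
    by (metis le_Suc_eq order_trans remain_Suc_subset order_refl)
qed

lemma remain_X: "X \<inter> V \<subseteq> remain E X V i"
  by (induction i) auto

lemma remain_Suc_mem: "v \<in> remain E X V (Suc i) \<longleftrightarrow>
   v \<in> remain E X V i \<and> (v \<in> X \<or> \<not> simplicial E (remain E X V i) v)"
  by auto

lemma layer_Suc: "layer E X V (Suc i) = remain E X V i - remain E X V (Suc i)"
  by (simp add: layer_def)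

definition imgE :: "(nat \<Rightarrow> nat) \<Rightarrow> nat set set \<Rightarrow> nat set set" where
  "imgE h E = (\<lambda>e. h ` e) ` E"

lemma imgE_edges: "inj_on h V \<Longrightarrow> E \<subseteq> edges V \<Longrightarrow> imgE h E \<subseteq> edges (h ` V)"
proof
  fix e assume inj: "inj_on h V" and E: "E \<subseteq> edges V" and "e \<in> imgE h E"
  then obtain u v where "h ` {u,v} = e" "u \<noteq> v" "u \<in> V" "v \<in> V"
    unfolding imgE_def edges_def by blast
  moreover have "h u \<noteq> h v" using inj \<open>u \<noteq> v\<close> \<open>u \<in> V\<close> \<open>v \<in> V\<close> by (auto dest: inj_onD)
  ultimately show "e \<in> edges (h ` V)" unfolding edges_def by auto
qed

lemma adj_imgE:
  assumes inj: "inj_on h V" and E: "E \<subseteq> edges V" and a: "a \<in> V" and b: "b \<in> V"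
  shows "adj (imgE h E) (h a) (h b) \<longleftrightarrow> adj E a b"
proof
  assume "adj (imgE h E) (h a) (h b)"
  then obtain e where e: "e \<in> E" "{h a, h b} = h ` e" "h a \<noteq> h b"
    unfolding adj_def imgE_def by auto
  from e(1) E obtain u v where uv: "e = {u,v}" "u \<in> V" "v \<in> V" "u \<noteq> v"
    unfolding edges_def by auto
  have "{h a, h b} = {h u, h v}" using e uv by auto
  then have "(h a = h u \<and> h b = h v) \<or> (h a = h v \<and> h b = h u)"
    by (auto simp: doubleton_eq_iff)
  then have "(a = u \<and> b = v) \<or> (a = v \<and> b = u)"
    using inj a b uv by (auto dest: inj_onD)
  then show "adj E a b" using e uv unfolding adj_def by (auto simp: insert_commute)
next
  assume "adj E a b"
  then show "adj (imgE h E) (h a) (h b)"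
  proof -
    have "{h a, h b} = h ` {a,b}" by simp
    moreover have "{a,b} \<in> E" "h a \<noteq> h b" using inj a b \<open>adj E a b\<close> unfolding adj_def by (auto dest: inj_onD)
    ultimately show ?thesis unfolding adj_def imgE_def by (metis image_eqI)
  qed
qed

lemma adj_imgE_in:
  assumes inj: "inj_on h V" and E: "E \<subseteq> edges V" and "adj (imgE h E) p q"
  shows "\<exists>a\<in>V. \<exists>b\<in>V. p = h a \<and> q = h b"
  using adj_in_edges[OF imgE_edges[OF inj E] assms(3)] by auto

lemma imgE_inv:
  assumes inj: "inj_on h V" and E: "E \<subseteq> edges V"
  shows "imgE (inv_into V h) (imgE h E) = E"
proof -
  have "\<And>e. e \<in> E \<Longrightarrow> inv_into V h ` h ` e = e"
  proof -
    fix e assume "e \<in> E"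
    then have "e \<subseteq> V" using E unfolding edges_def by auto
    then show "inv_into V h ` h ` e = e"
      using inj by (simp add: image_image inv_into_f_f subset_iff cong: image_cong)
  qed
  then show ?thesis unfolding imgE_def by (simp add: image_image)
qed

lemma inv_image_back: "inj_on h V \<Longrightarrow> S \<subseteq> V \<Longrightarrow> inv_into V h ` h ` S = S"
  by (metis image_inv_into_cancel inv_into_image_cancel order_refl)

lemma inj_inv: "inj_on h V \<Longrightarrow> inj_on (inv_into V h) (h ` V)"
  by (simp add: inj_on_inv_into)

lemma clique_imgE:
  assumes inj: "inj_on h V" and E: "E \<subseteq> edges V" and S: "S \<subseteq> V"
  shows "is_clique (imgE h E) (h ` S) \<longleftrightarrow> is_clique E S"
  unfolding is_clique_def using adj_imgE[OF inj E] S inj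
  by (auto simp: subset_iff inj_on_eq_iff[OF inj])

lemma nbhd_imgE:
  assumes inj: "inj_on h V" and E: "E \<subseteq> edges V" and W: "W \<subseteq> V" and v: "v \<in> V"
  shows "{u \<in> h ` W. adj (imgE h E) u (h v)} = h ` {u \<in> W. adj E u v}"
  using adj_imgE[OF inj E] W v by (auto simp: subset_iff)

lemma simplicial_imgE:
  assumes inj: "inj_on h V" and E: "E \<subseteq> edges V" and W: "W \<subseteq> V" and v: "v \<in> V"
  shows "simplicial (imgE h E) (h ` W) (h v) \<longleftrightarrow> simplicial E W v"
proof -
  have "h v \<in> h ` W \<longleftrightarrow> v \<in> W" using inj W v by (auto simp: inj_on_image_mem_iff)
  moreover have "is_clique (imgE h E) {u \<in> h ` W. adj (imgE h E) u (h v)}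
     \<longleftrightarrow> is_clique E {u \<in> W. adj E u v}"
    using nbhd_imgE[OF assms] clique_imgE[OF inj E, of "{u \<in> W. adj E u v}"] W by auto
  ultimately show ?thesis unfolding simplicial_def by simp
qed

lemma remain_imgE:
  assumes inj: "inj_on h V" and E: "E \<subseteq> edges V" and X: "X \<subseteq> V"
  shows "remain (imgE h E) (h ` X) (h ` V) i = h ` remain E X V i"
proof (induction i)
  case 0 then show ?case by simp
next
  case (Suc i)
  let ?R = "remain E X V i"
  have RV: "?R \<subseteq> V" by (rule remain_subset)
  have "h ` (?R - {v \<in> ?R - X. simplicial E ?R v})
     = h ` ?R - h ` {v \<in> ?R - X. simplicial E ?R v}"
    by (rule inj_on_image_set_diff[OF inj]) (use RV in auto)
  also have "h ` {v \<in> ?R - X. simplicial E ?R v}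
     = {w \<in> h ` ?R - h ` X. simplicial (imgE h E) (h ` ?R) w}"
  proof -
    have "\<And>v. v \<in> ?R \<Longrightarrow> (h v \<in> h ` X) = (v \<in> X)"
      using inj X RV by (meson inj_on_image_mem_iff subsetD)
    then show ?thesis using simplicial_imgE[OF inj E RV] RV by auto
  qed
  finally show ?case using Suc by simp
qed

lemma image_diff_inj: "inj_on h V \<Longrightarrow> A \<subseteq> V \<Longrightarrow> B \<subseteq> V \<Longrightarrow> h ` (A - B) = h ` A - h ` B"
  by (rule inj_on_image_set_diff) auto

lemma layer_imgE:
  assumes inj: "inj_on h V" and E: "E \<subseteq> edges V" and X: "X \<subseteq> V"
  shows "layer (imgE h E) (h ` X) (h ` V) i = h ` layer E X V i"
  unfolding layer_def remain_imgE[OF assms]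
  by (rule image_diff_inj[symmetric, OF inj remain_subset remain_subset])

lemma evap_time_imgE:
  assumes inj: "inj_on h V" and E: "E \<subseteq> edges V" and X: "X \<subseteq> V"
  shows "evap_time (imgE h E) (h ` X) (h ` V) t \<longleftrightarrow> evap_time E X V t"
  unfolding evap_time_def remain_imgE[OF assms]
  using inj_on_image_eq_iff[OF inj remain_subset X] by simp

lemma set_evap_time_imgE:
  assumes inj: "inj_on h V" and E: "E \<subseteq> edges V" and X: "X \<subseteq> V" and S: "S \<subseteq> V"
  shows "set_evap_time (imgE h E) (h ` X) (h ` V) (h ` S) t \<longleftrightarrow> set_evap_time E X V S t"
proof -
  have "\<And>j. layer (imgE h E) (h ` X) (h ` V) j \<inter> h ` S = h ` (layer E X V j \<inter> S)"
    unfolding layer_imgE[OF assms(1-3)]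
    by (rule inj_on_image_Int[symmetric, OF inj _ S]) (simp add: layer_def remain_subset[THEN subset_trans] Diff_subset[THEN subset_trans] remain_subset)
  then show ?thesis unfolding set_evap_time_def by simp
qed

lemma adj_rel_imgE_rtrancl:
  assumes inj: "inj_on h V" and E: "E \<subseteq> edges V" and W: "W \<subseteq> V"
  and "(a, b) \<in> (adj_rel E W)\<^sup>*"
  shows "(h a, h b) \<in> (adj_rel (imgE h E) (h ` W))\<^sup>*"
  using assms(4)
proof (induction rule: rtrancl_induct)
  case base then show ?case by simp
next
  case (step b c)
  then have "(h b, h c) \<in> adj_rel (imgE h E) (h ` W)"
    using adj_imgE[OF inj E] W unfolding adj_rel_def by auto
  then show ?case using step by (meson rtrancl.rtrancl_into_rtrancl)
qed

lemma adj_rel_imgE_iff: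
  assumes inj: "inj_on h V" and E: "E \<subseteq> edges V" and W: "W \<subseteq> V" and a: "a \<in> W" and b: "b \<in> W"
  shows "(h a, h b) \<in> (adj_rel (imgE h E) (h ` W))\<^sup>* \<longleftrightarrow> (a, b) \<in> (adj_rel E W)\<^sup>*"
proof
  assume "(h a, h b) \<in> (adj_rel (imgE h E) (h ` W))\<^sup>*"
  from adj_rel_imgE_rtrancl[OF inj_inv[OF inj] imgE_edges[OF inj E] _ this]
  have "(inv_into V h (h a), inv_into V h (h b)) \<in> (adj_rel E (inv_into V h ` h ` W))\<^sup>*"
    using W by (simp add: imgE_inv[OF inj E] image_mono)
  then show "(a, b) \<in> (adj_rel E W)\<^sup>*"
    using W a b inj by (simp add: inv_image_back subset_iff inv_into_f_f)
qed (rule adj_rel_imgE_rtrancl[OF assms(1-3)])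

lemma component_imgE:
  assumes inj: "inj_on h V" and E: "E \<subseteq> edges V" and W: "W \<subseteq> V" and v: "v \<in> W"
  shows "component (imgE h E) (h ` W) (h v) = h ` component E W v"
  unfolding component_def using adj_rel_imgE_iff[OF inj E W v] by auto

lemma components_imgE:
  assumes inj: "inj_on h V" and E: "E \<subseteq> edges V" and W: "W \<subseteq> V"
  shows "components (imgE h E) (h ` W) = (\<lambda>C. h ` C) ` components E W"
  unfolding components_def using component_imgE[OF assms] by (auto simp: image_image)

lemma connected_imgE:
  assumes inj: "inj_on h V" and E: "E \<subseteq> edges V" and W: "W \<subseteq> V"
  shows "connected_on (imgE h E) (h ` W) \<longleftrightarrow> connected_on E W"
  unfolding connected_on_def using adj_rel_imgE_iff[OF assms] by auto

lemma chordal_pullback: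
  assumes inj: "inj_on h V" and E: "E \<subseteq> edges V"
  and ch: "chordal_on (imgE h E) (h ` V)"
  shows "chordal_on E V"
  unfolding chordal_on_def
proof (intro allI impI)
  fix cs assume cs: "distinct cs \<and> 4 \<le> length cs \<and> set cs \<subseteq> V \<and>
      (\<forall>i<length cs. adj E (cs ! i) (cs ! ((i + 1) mod length cs)))"
  let ?ds = "map h cs"
  have "distinct ?ds" using cs inj by (simp add: distinct_map inj_on_subset)
  moreover have "\<forall>i<length ?ds. adj (imgE h E) (?ds ! i) (?ds ! ((i + 1) mod length ?ds))"
  proof (intro allI impI)
    fix i assume "i < length ?ds"
    then have "i < length cs" "(i+1) mod length cs < length cs" using cs by (auto intro: mod_less_divisor)
    then show "adj (imgE h E) (?ds ! i) (?ds ! ((i + 1) mod length ?ds))"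
      using cs adj_imgE[OF inj E] by (simp add: subset_iff)
  qed
  ultimately obtain i j where ij: "i < length cs" "j < length cs" "i \<noteq> j"
    "j \<noteq> (i + 1) mod length cs" "i \<noteq> (j + 1) mod length cs"
    "adj (imgE h E) (?ds ! i) (?ds ! j)"
  proof -
    assume d: "distinct ?ds" and a: "\<forall>i<length ?ds. adj (imgE h E) (?ds ! i) (?ds ! ((i + 1) mod length ?ds))"
      and th: "\<And>i j. i < length cs \<Longrightarrow> j < length cs \<Longrightarrow> i \<noteq> j \<Longrightarrow>
    j \<noteq> (i + 1) mod length cs \<Longrightarrow> i \<noteq> (j + 1) mod length cs \<Longrightarrow>
    adj (imgE h E) (?ds ! i) (?ds ! j) \<Longrightarrow> thesis"
    have pre: "distinct ?ds \<and> 4 \<le> length ?ds \<and> set ?ds \<subseteq> h ` V \<and>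
        (\<forall>i<length ?ds. adj (imgE h E) (?ds ! i) (?ds ! ((i + 1) mod length ?ds)))"
      using cs d a by auto
    have "\<exists>i<length ?ds. \<exists>j<length ?ds. i \<noteq> j \<and> j \<noteq> (i + 1) mod length ?ds
             \<and> i \<noteq> (j + 1) mod length ?ds \<and> adj (imgE h E) (?ds ! i) (?ds ! j)"
      by (rule ch[unfolded chordal_on_def, rule_format, OF pre])
    then show thesis using th unfolding length_map by blast
  qed
  then have "adj E (cs ! i) (cs ! j)" using adj_imgE[OF inj E] cs by (auto simp: subset_iff)
  then show "\<exists>i<length cs. \<exists>j<length cs. i \<noteq> j \<and> j \<noteq> (i + 1) mod length cs
             \<and> i \<noteq> (j + 1) mod length cs \<and> adj E (cs ! i) (cs ! j)" using ij by blast
qed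

lemma colorable_pullback:
  assumes inj: "inj_on h V" and E: "E \<subseteq> edges V"
  and co: "colorable_on \<omega> (imgE h E) (h ` V)"
  shows "colorable_on \<omega> E V"
proof -
  obtain c where c: "\<forall>v\<in>h ` V. c v < \<omega>" "\<forall>u\<in>h ` V. \<forall>v\<in>h ` V. adj (imgE h E) u v \<longrightarrow> c u \<noteq> c v"
    using co unfolding colorable_on_def by blast
  show ?thesis unfolding colorable_on_def
    by (rule exI[of _ "c \<circ> h"]) (use c adj_imgE[OF inj E] in auto)
qed

lemma chordal_imgE:
  assumes inj: "inj_on h V" and E: "E \<subseteq> edges V"
  shows "chordal_on (imgE h E) (h ` V) \<longleftrightarrow> chordal_on E V"
proof
  assume "chordal_on E V"
  then have "chordal_on (imgE (inv_into V h) (imgE h E)) (inv_into V h ` h ` V)"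
    using imgE_inv[OF inj E] inv_image_back[OF inj] by simp
  then show "chordal_on (imgE h E) (h ` V)"
    by (rule chordal_pullback[OF inj_inv[OF inj] imgE_edges[OF inj E]])
qed (rule chordal_pullback[OF inj E])

lemma colorable_imgE:
  assumes inj: "inj_on h V" and E: "E \<subseteq> edges V"
  shows "colorable_on \<omega> (imgE h E) (h ` V) \<longleftrightarrow> colorable_on \<omega> E V"
proof
  assume "colorable_on \<omega> E V"
  then have "colorable_on \<omega> (imgE (inv_into V h) (imgE h E)) (inv_into V h ` h ` V)"
    using imgE_inv[OF inj E] inv_image_back[OF inj] by simp
  then show "colorable_on \<omega> (imgE h E) (h ` V)"
    by (rule colorable_pullback[OF inj_inv[OF inj] imgE_edges[OF inj E]])
qed (rule colorable_pullback[OF inj E])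

lemma adj_rel_rtrancl_mono:
  assumes "W \<subseteq> W'" "\<And>u v. u \<in> W \<Longrightarrow> v \<in> W \<Longrightarrow> adj E u v \<Longrightarrow> adj E' u v"
    and "(a, b) \<in> (adj_rel E W)\<^sup>*"
  shows "(a, b) \<in> (adj_rel E' W')\<^sup>*"
proof -
  have "adj_rel E W \<subseteq> adj_rel E' W'" using assms(1,2) unfolding adj_rel_def by auto
  then show ?thesis using assms(3) rtrancl_mono by blast
qed

lemma sym_adj_rel: "sym (adj_rel E W)"
  unfolding sym_def adj_rel_def using adj_sym by blast

lemma adj_rel_rtrancl_sym: "(a, b) \<in> (adj_rel E W)\<^sup>* \<Longrightarrow> (b, a) \<in> (adj_rel E W)\<^sup>*"
  using sym_rtrancl[OF sym_adj_rel] unfolding sym_def by blast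

lemma adj_rel_rtrancl_in: "(a, b) \<in> (adj_rel E W)\<^sup>* \<Longrightarrow> a \<in> W \<Longrightarrow> b \<in> W"
  by (induction rule: rtrancl_induct) (auto simp: adj_rel_def)

lemma component_subset: "component E W v \<subseteq> W"
  unfolding component_def by auto

lemma component_self: "v \<in> W \<Longrightarrow> v \<in> component E W v"
  unfolding component_def by auto

lemma component_closed:
  "u \<in> component E W v \<Longrightarrow> w \<in> W \<Longrightarrow> adj E u w \<Longrightarrow> w \<in> component E W v"
  unfolding component_def adj_rel_def
  by (auto intro: rtrancl_into_rtrancl)

lemma component_eq:
  assumes "u \<in> component E W v" shows "component E W u = component E W v"
proof -
  have uv: "(v, u) \<in> (adj_rel E W)\<^sup>*" using assms unfolding component_def by auto
  then have vu: "(u, v) \<in> (adj_rel E W)\<^sup>*" by (rule adj_rel_rtrancl_sym)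
  show ?thesis unfolding component_def
    using uv vu by (auto intro: rtrancl_trans)
qed

lemma components_mem:
  assumes "C \<in> components E W" "v \<in> C" shows "C = component E W v"
proof -
  obtain w where "w \<in> W" "C = component E W w" using assms(1) unfolding components_def by auto
  then show ?thesis using component_eq assms(2) by metis
qed

lemma components_ne: "C \<in> components E W \<Longrightarrow> C \<noteq> {} \<and> C \<subseteq> W"
  unfolding components_def using component_self component_subset by blast

lemma components_closed:
  "C \<in> components E W \<Longrightarrow> u \<in> C \<Longrightarrow> w \<in> W \<Longrightarrow> adj E u w \<Longrightarrow> w \<in> C"
  using components_mem component_closed component_self
  by (metis components_ne subsetD)

lemma path_in_component:
  assumes "(a, b) \<in> (adj_rel E W)\<^sup>*" "a \<in> W"
  shows "(a, b) \<in> (adj_rel E (component E W a))\<^sup>*"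
  using assms(1)
proof (induction rule: rtrancl_induct)
  case base then show ?case by simp
next
  case (step b c)
  have "b \<in> component E W a" using step(1) assms(2) adj_rel_rtrancl_in[OF step(1)]
    unfolding component_def by auto
  moreover then have "c \<in> component E W a" using step(2) component_closed
    unfolding adj_rel_def by auto
  ultimately have "(b, c) \<in> adj_rel E (component E W a)" using step(2) unfolding adj_rel_def by auto
  then show ?case using step(3) by (meson rtrancl.rtrancl_into_rtrancl)
qed

lemma cut_edge:
  assumes "connected_on E W" "C \<subseteq> W" "a \<in> C" "b \<in> W" "b \<notin> C"
  shows "\<exists>u\<in>C. \<exists>w\<in>W - C. adj E u w"
proof -
  have "(a, b) \<in> (adj_rel E W)\<^sup>*" using assms unfolding connected_on_def by auto
  then show ?thesis using assms(5)
  proof (induction rule: rtrancl_induct)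
    case base then show ?case using assms(3) by simp
  next
    case (step y z)
    show ?case
    proof (cases "y \<in> C")
      case True then show ?thesis using step unfolding adj_rel_def by auto
    next
      case False then show ?thesis using step by auto
    qed
  qed
qed

lemma connected_from_core:
  assumes "S \<subseteq> W" "S \<noteq> {}" "is_clique E S"
    and reach: "\<And>w. w \<in> W \<Longrightarrow> \<exists>s\<in>S. (w, s) \<in> (adj_rel E W)\<^sup>*"
  shows "connected_on E W"
  unfolding connected_on_def
proof (intro conjI ballI)
  show "W \<noteq> {}" using assms by auto
next
  fix u v assume u: "u \<in> W" and v: "v \<in> W"
  obtain s where s: "s \<in> S" "(u, s) \<in> (adj_rel E W)\<^sup>*" using reach[OF u] by auto
  obtain s' where s': "s' \<in> S" "(v, s') \<in> (adj_rel E W)\<^sup>*" using reach[OF v] by auto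
  have "(s, s') \<in> (adj_rel E W)\<^sup>*"
  proof (cases "s = s'")
    case False
    then have "(s, s') \<in> adj_rel E W" using assms(1,3) s s' unfolding is_clique_def adj_rel_def by auto
    then show ?thesis by auto
  qed simp
  moreover have "(s', v) \<in> (adj_rel E W)\<^sup>*" using s'(2) by (rule adj_rel_rtrancl_sym)
  ultimately show "(u, v) \<in> (adj_rel E W)\<^sup>*" using s(2) by (meson rtrancl_trans)
qed

lemma component_split:
  assumes "v \<in> K" "K \<subseteq> U" "\<And>u w. u \<in> K \<Longrightarrow> w \<in> U - K \<Longrightarrow> \<not> adj E u w"
  shows "component E U v = component E K v"
proof
  show "component E K v \<subseteq> component E U v"
    unfolding component_def using assms(2) adj_rel_rtrancl_mono[of K U E E] by auto
next
  have "\<And>b. (v, b) \<in> (adj_rel E U)\<^sup>* \<Longrightarrow> (v, b) \<in> (adj_rel E K)\<^sup>* \<and> b \<in> K"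
  proof -
    fix b assume "(v, b) \<in> (adj_rel E U)\<^sup>*"
    then show "(v, b) \<in> (adj_rel E K)\<^sup>* \<and> b \<in> K"
    proof (induction rule: rtrancl_induct)
      case base then show ?case using assms(1) by simp
    next
      case (step y z)
      then have "z \<in> K" using assms(3) unfolding adj_rel_def by auto
      then have "(y, z) \<in> adj_rel E K" using step unfolding adj_rel_def by auto
      then show ?case using step \<open>z \<in> K\<close> by (meson rtrancl.rtrancl_into_rtrancl)
    qed
  qed
  then show "component E U v \<subseteq> component E K v" unfolding component_def by auto
qed

lemma adj_rel_cong:
  "(\<And>u w. u \<in> K \<Longrightarrow> w \<in> K \<Longrightarrow> adj E u w = adj E' u w) \<Longrightarrow> adj_rel E K = adj_rel E' K"
  unfolding adj_rel_def by auto

lemma component_cong: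
  "(\<And>u w. u \<in> K \<Longrightarrow> w \<in> K \<Longrightarrow> adj E u w = adj E' u w) \<Longrightarrow> component E K v = component E' K v"
  unfolding component_def using adj_rel_cong by metis

lemma components_cong:
  "(\<And>u w. u \<in> K \<Longrightarrow> w \<in> K \<Longrightarrow> adj E u w = adj E' u w) \<Longrightarrow> components E K = components E' K"
  unfolding components_def using component_cong by (metis (no_types, lifting) image_cong)

lemma connected_cong:
  "(\<And>u w. u \<in> K \<Longrightarrow> w \<in> K \<Longrightarrow> adj E u w = adj E' u w) \<Longrightarrow> connected_on E K = connected_on E' K"
  unfolding connected_on_def using adj_rel_cong by metis

lemma chordal_cong:
  assumes "chordal_on E V" "W \<subseteq> V" "\<And>u v. u \<in> W \<Longrightarrow> v \<in> W \<Longrightarrow> adj E' u v \<longleftrightarrow> adj E u v"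
  shows "chordal_on E' W"
  unfolding chordal_on_def
proof (intro allI impI)
  fix cs assume cs: "distinct cs \<and> 4 \<le> length cs \<and> set cs \<subseteq> W \<and>
      (\<forall>i<length cs. adj E' (cs ! i) (cs ! ((i + 1) mod length cs)))"
  have sW: "\<And>i. i < length cs \<Longrightarrow> cs ! i \<in> W" using cs nth_mem by blast
  have pre: "distinct cs \<and> 4 \<le> length cs \<and> set cs \<subseteq> V \<and>
      (\<forall>i<length cs. adj E (cs ! i) (cs ! ((i + 1) mod length cs)))"
  proof -
    have "\<forall>i<length cs. adj E (cs ! i) (cs ! ((i + 1) mod length cs))"
    proof (intro allI impI)
      fix i assume i: "i < length cs"
      have "length cs > 0" using cs by auto
      then have "(i + 1) mod length cs < length cs" by simp
      then show "adj E (cs ! i) (cs ! ((i + 1) mod length cs))"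
      proof -
        have "adj E' (cs ! i) (cs ! ((i + 1) mod length cs))" using cs i by blast
        then show ?thesis using assms(3) sW i \<open>(i + 1) mod length cs < length cs\<close> by blast
      qed
    qed
    moreover have "set cs \<subseteq> V" using cs assms(2) by (meson order_trans)
    ultimately show ?thesis using cs by simp
  qed
  obtain i j where ij: "i<length cs" "j<length cs" "i \<noteq> j" "j \<noteq> (i + 1) mod length cs"
             "i \<noteq> (j + 1) mod length cs" "adj E (cs ! i) (cs ! j)"
    using assms(1)[unfolded chordal_on_def, rule_format, OF pre] by auto
  then have "adj E' (cs ! i) (cs ! j)" using assms(3) sW by simp
  then show "\<exists>i<length cs. \<exists>j<length cs. i \<noteq> j \<and> j \<noteq> (i + 1) mod length cs
             \<and> i \<noteq> (j + 1) mod length cs \<and> adj E' (cs ! i) (cs ! j)" using ij by auto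
qed

lemma colorable_mono:
  assumes "colorable_on \<omega> E V" "W \<subseteq> V" "\<And>u v. u \<in> W \<Longrightarrow> v \<in> W \<Longrightarrow> adj E' u v \<Longrightarrow> adj E u v"
  shows "colorable_on \<omega> E' W"
proof -
  obtain c where c: "\<forall>v\<in>V. c v < \<omega>" "\<forall>u\<in>V. \<forall>v\<in>V. adj E u v \<longrightarrow> c u \<noteq> c v"
    using assms(1) unfolding colorable_on_def by blast
  have "\<forall>v\<in>W. c v < \<omega>" using c(1) assms(2) by auto
  moreover have "\<forall>u\<in>W. \<forall>v\<in>W. adj E' u v \<longrightarrow> c u \<noteq> c v"
  proof (intro ballI impI)
    fix u v assume "u \<in> W" "v \<in> W" "adj E' u v"
    then have "adj E u v" "u \<in> V" "v \<in> V" using assms(2,3) by auto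
    then show "c u \<noteq> c v" using c(2) by blast
  qed
  ultimately show ?thesis unfolding colorable_on_def by blast
qed

lemma two_separators:
  fixes f :: "nat \<Rightarrow> nat"
  assumes r: "0 < r" "r < n" and f0: "f 0 \<in> A - B" and fr: "f r \<in> B - A"
    and inAB: "\<And>i. i < n \<Longrightarrow> f i \<in> A \<union> B"
    and noKM: "\<And>i. i < n \<Longrightarrow> \<not> (f i \<in> A - B \<and> f ((i + 1) mod n) \<in> B - A)"
    and noMK: "\<And>i. i < n \<Longrightarrow> \<not> (f i \<in> B - A \<and> f ((i + 1) mod n) \<in> A - B)"
  shows "\<exists>i1 i2. 0 < i1 \<and> i1 < r \<and> r < i2 \<and> i2 < n \<and> f i1 \<in> A \<inter> B \<and> f i2 \<in> A \<inter> B"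
proof -
  define j1 where "j1 = (LEAST j. j \<le> r \<and> f j \<notin> A - B)"
  have ex1: "r \<le> r \<and> f r \<notin> A - B" using fr by auto
  have j1: "j1 \<le> r" "f j1 \<notin> A - B" using LeastI[of "\<lambda>j. j \<le> r \<and> f j \<notin> A - B", OF ex1]
    unfolding j1_def by auto
  have j1min: "\<And>j. j < j1 \<Longrightarrow> f j \<in> A - B"
  proof -
    fix j assume "j < j1"
    then have "j \<le> r" using j1 by simp
    then show "f j \<in> A - B" using not_less_Least[of j "\<lambda>j. j \<le> r \<and> f j \<notin> A - B"] \<open>j < j1\<close>
      unfolding j1_def by blast
  qed
  have "j1 > 0" using j1 f0 by (cases j1) auto
  then have "f (j1 - 1) \<in> A - B" using j1min by simp
  moreover have "((j1 - 1) + 1) mod n = j1" using \<open>j1 > 0\<close> j1 r by simp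
  ultimately have "f j1 \<notin> B - A" using noKM[of "j1 - 1"] j1 r by auto
  then have a1: "f j1 \<in> A \<inter> B" using inAB[of j1] j1 r by auto
  have "j1 \<noteq> r" using a1 fr by auto
  then have a1': "0 < j1" "j1 < r" using \<open>j1 > 0\<close> j1 by auto
  define j2 where "j2 = (LEAST j. r < j \<and> (j = n \<or> f j \<in> A - B))"
  have ex2: "r < n \<and> (n = n \<or> f n \<in> A - B)" using r by auto
  have j2: "r < j2" "j2 = n \<or> f j2 \<in> A - B" "j2 \<le> n"
    using LeastI[of "\<lambda>j. r < j \<and> (j = n \<or> f j \<in> A - B)", OF ex2]
      Least_le[of "\<lambda>j. r < j \<and> (j = n \<or> f j \<in> A - B)", OF ex2]
    unfolding j2_def by auto
  have j2min: "\<And>j. r < j \<Longrightarrow> j < j2 \<Longrightarrow> f j \<notin> A - B"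
    using not_less_Least[of _ "\<lambda>j. r < j \<and> (j = n \<or> f j \<in> A - B)"] j2 unfolding j2_def by (metis less_le_not_le order.strict_trans2)
  have nAB: "f (j2 - 1) \<notin> A - B"
  proof (cases "j2 - 1 = r")
    case True then show ?thesis using fr by auto
  next
    case False then show ?thesis using j2min[of "j2 - 1"] j2 by auto
  qed
  have succ: "f ((j2 - 1 + 1) mod n) \<in> A - B"
  proof (cases "j2 = n")
    case True then show ?thesis using f0 r by simp
  next
    case False then show ?thesis using j2 by simp
  qed
  have "f (j2 - 1) \<notin> B - A" using noMK[of "j2 - 1"] succ j2 by auto
  moreover have "j2 - 1 < n" using j2 by auto
  ultimately have a2: "f (j2 - 1) \<in> A \<inter> B" using inAB[of "j2 - 1"] nAB by auto
  have "j2 - 1 \<noteq> r" using a2 fr by auto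
  then have "r < j2 - 1" "j2 - 1 < n" using j2 by auto
  then show ?thesis using a1 a1' a2 by blast
qed

lemma shift_inj:
  fixes a b n p :: nat
  assumes "a < n" "b < n" "(p + a) mod n = (p + b) mod n"
  shows "a = b"
proof -
  { fix a b :: nat assume ab: "b \<le> a" "a < n" "(p + a) mod n = (p + b) mod n"
    then have "n dvd (p + a) - (p + b)" using mod_eq_dvd_iff_nat[of "p + b" "p + a" n] by simp
    then have "n dvd a - b" by simp
    moreover have "a - b < n" using ab by simp
    ultimately have "a - b = 0" using dvd_imp_le[of n "a - b"] by (cases "a - b = 0") auto
    then have "a = b" using ab by simp }
  note * = this
  show ?thesis
  proof (cases "b \<le> a")
    case True then show ?thesis using * assms by blast
  next
    case False then show ?thesis using *[of a b] assms by simp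
  qed
qed

lemma mod_succ_shift: "((p + i) mod n + 1) mod n = (p + (i + 1)) mod (n::nat)"
proof -
  have "((p + i) mod n + 1) mod n = ((p + i) + 1) mod n" by (rule mod_add_left_eq)
  then show ?thesis by (simp add: add.assoc)
qed

lemma mod_shift_succ: "(p + (i + 1) mod n) mod n = (p + (i + 1)) mod (n::nat)"
  by (simp add: mod_add_right_eq)

lemma chordal_clique_sum:
  assumes ch1: "chordal_on E1 A" and ch2: "chordal_on E2 B"
    and E1: "E1 \<subseteq> edges A" and E2: "E2 \<subseteq> edges B"
    and cl1: "is_clique E1 (A \<inter> B)" and cl2: "is_clique E2 (A \<inter> B)"
  shows "chordal_on (E1 \<union> E2) (A \<union> B)"
proof -
  let ?E = "E1 \<union> E2"
  have adjA: "\<And>u v. u \<in> A \<Longrightarrow> v \<in> A \<Longrightarrow> adj ?E u v \<longleftrightarrow> adj E1 u v"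
  proof -
    fix u v assume "u \<in> A" "v \<in> A"
    show "adj ?E u v \<longleftrightarrow> adj E1 u v"
    proof
      assume "adj ?E u v"
      then consider "adj E1 u v" | "adj E2 u v" by (auto simp: adj_Un)
      then show "adj E1 u v"
      proof cases
        case 2
        then have "u \<in> B" "v \<in> B" "u \<noteq> v" using adj_in_edges[OF E2] by (auto simp: adj_def)
        then show ?thesis using cl1 \<open>u \<in> A\<close> \<open>v \<in> A\<close> unfolding is_clique_def by auto
      qed
    qed (simp add: adj_Un)
  qed
  have adjB: "\<And>u v. u \<in> B \<Longrightarrow> v \<in> B \<Longrightarrow> adj ?E u v \<longleftrightarrow> adj E2 u v"
  proof -
    fix u v assume "u \<in> B" "v \<in> B"
    show "adj ?E u v \<longleftrightarrow> adj E2 u v"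
    proof
      assume "adj ?E u v"
      then consider "adj E1 u v" | "adj E2 u v" by (auto simp: adj_Un)
      then show "adj E2 u v"
      proof cases
        case 1
        then have "u \<in> A" "v \<in> A" "u \<noteq> v" using adj_in_edges[OF E1] by (auto simp: adj_def)
        then show ?thesis using cl2 \<open>u \<in> B\<close> \<open>v \<in> B\<close> unfolding is_clique_def by auto
      qed
    qed (simp add: adj_Un)
  qed
  have cross: "\<And>u v. u \<in> A - B \<Longrightarrow> v \<in> B - A \<Longrightarrow> \<not> adj ?E u v"
    using adj_in_edges[OF E1] adj_in_edges[OF E2] by (auto simp: adj_Un)
  have clE: "is_clique ?E (A \<inter> B)" using cl1 unfolding is_clique_def by (auto simp: adj_Un)
  have chA: "chordal_on ?E A" by (rule chordal_cong[OF ch1 order_refl adjA])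
  have chB: "chordal_on ?E B" by (rule chordal_cong[OF ch2 order_refl adjB])
  show ?thesis unfolding chordal_on_def
  proof (intro allI impI)
    fix cs assume cs: "distinct cs \<and> 4 \<le> length cs \<and> set cs \<subseteq> A \<union> B \<and>
      (\<forall>i<length cs. adj ?E (cs ! i) (cs ! ((i + 1) mod length cs)))"
    let ?n = "length cs"
    let ?G = "\<exists>i<length cs. \<exists>j<length cs. i \<noteq> j \<and> j \<noteq> (i + 1) mod length cs
             \<and> i \<noteq> (j + 1) mod length cs \<and> adj ?E (cs ! i) (cs ! j)"
    have n0: "?n > 0" using cs by auto
    have inAB: "\<And>i. i < ?n \<Longrightarrow> cs ! i \<in> A \<union> B" using cs nth_mem by blast
    show ?G
    proof (cases "set cs \<subseteq> A")
      case True then show ?thesis using chA[unfolded chordal_on_def, rule_format, of cs] cs by blast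
    next
      case nA: False
      show ?thesis
      proof (cases "set cs \<subseteq> B")
        case True then show ?thesis using chB[unfolded chordal_on_def, rule_format, of cs] cs by blast
      next
        case nB: False
        obtain p where p: "p < ?n" "cs ! p \<notin> B" using nB by (metis in_set_conv_nth subsetI)
        obtain r0 where r0: "r0 < ?n" "cs ! r0 \<notin> A" using nA by (metis in_set_conv_nth subsetI)
        define f where "f i = cs ! ((p + i) mod ?n)" for i
        define r where "r = (r0 + (?n - p)) mod ?n"
        have pr: "(p + r) mod ?n = r0"
        proof -
          have "(p + r) mod ?n = (p + (r0 + (?n - p))) mod ?n" unfolding r_def by (simp add: mod_add_right_eq)
          also have "p + (r0 + (?n - p)) = r0 + ?n" using p by simp
          finally show ?thesis using r0 by simp
        qed
        have f0: "f 0 \<in> A - B" using p inAB unfolding f_def by auto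
        have fr: "f r \<in> B - A" using r0 inAB pr unfolding f_def by auto
        have rn: "r < ?n" unfolding r_def using n0 by simp
        have r0': "0 < r" using f0 fr by (cases "r = 0") auto
        have fin: "\<And>i. f i \<in> A \<union> B" unfolding f_def using inAB n0 by simp
        have fadj: "\<And>i. adj ?E (f i) (f ((i + 1) mod ?n))"
        proof -
          fix i
          have "(p + i) mod ?n < ?n" using n0 by simp
          then have "adj ?E (cs ! ((p + i) mod ?n)) (cs ! (((p + i) mod ?n + 1) mod ?n))" using cs by blast
          then show "adj ?E (f i) (f ((i + 1) mod ?n))" unfolding f_def mod_succ_shift mod_shift_succ .
        qed
        obtain i1 i2 where ii: "0 < i1" "i1 < r" "r < i2" "i2 < ?n" "f i1 \<in> A \<inter> B" "f i2 \<in> A \<inter> B"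
        proof -
          have "\<exists>i1 i2. 0 < i1 \<and> i1 < r \<and> r < i2 \<and> i2 < ?n \<and> f i1 \<in> A \<inter> B \<and> f i2 \<in> A \<inter> B"
          proof (rule two_separators[of r ?n f A B, OF r0' rn f0 fr])
            show "\<And>i. f i \<in> A \<union> B" by (rule fin)
            show "\<And>i. \<not> (f i \<in> A - B \<and> f ((i + 1) mod ?n) \<in> B - A)" using fadj cross by blast
            show "\<And>i. \<not> (f i \<in> B - A \<and> f ((i + 1) mod ?n) \<in> A - B)" using fadj cross adj_sym by metis
          qed
          then show ?thesis using that by blast
        qed
        define I1 where "I1 = (p + i1) mod ?n"
        define I2 where "I2 = (p + i2) mod ?n"
        have I: "I1 < ?n" "I2 < ?n" unfolding I1_def I2_def using n0 by auto
        have d1: "I1 \<noteq> I2" unfolding I1_def I2_def using shift_inj[of i1 ?n i2 p] ii by auto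
        have d2: "I2 \<noteq> (I1 + 1) mod ?n"
          unfolding I1_def I2_def mod_succ_shift using shift_inj[of i2 ?n "i1 + 1" p] ii by auto
        have d3: "I1 \<noteq> (I2 + 1) mod ?n"
        proof (cases "i2 + 1 < ?n")
          case True then show ?thesis
            unfolding I1_def I2_def mod_succ_shift using shift_inj[of i1 ?n "i2 + 1" p] ii by auto
        next
          case False
          then have "i2 + 1 = ?n" using ii by simp
          then have "(I2 + 1) mod ?n = (p + 0) mod ?n" unfolding I2_def mod_succ_shift by simp
          then show ?thesis unfolding I1_def using shift_inj[of i1 ?n 0 p] ii n0 by auto
        qed
        have "cs ! I1 \<noteq> cs ! I2" using d1 I cs by (simp add: nth_eq_iff_index_eq)
        moreover have "cs ! I1 \<in> A \<inter> B" "cs ! I2 \<in> A \<inter> B" using ii unfolding f_def I1_def I2_def by auto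
        ultimately have "adj ?E (cs ! I1) (cs ! I2)" using clE unfolding is_clique_def by blast
        then show ?thesis using I d1 d2 d3 by blast
      qed
    qed
  qed
qed

lemma clique_color_inj:
  assumes "\<forall>u\<in>V. \<forall>v\<in>V. adj E u v \<longrightarrow> c u \<noteq> c v" "is_clique E Q" "Q \<subseteq> V"
  shows "inj_on c Q"
  using assms unfolding inj_on_def is_clique_def by blast

lemma colorable_clique_sum:
  assumes co1: "colorable_on \<omega> E1 A" and co2: "colorable_on \<omega> E2 B"
    and E1: "E1 \<subseteq> edges A" and E2: "E2 \<subseteq> edges B" and fin: "finite (A \<inter> B)"
    and cl1: "is_clique E1 (A \<inter> B)" and cl2: "is_clique E2 (A \<inter> B)"
  shows "colorable_on \<omega> (E1 \<union> E2) (A \<union> B)"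
proof -
  let ?Q = "A \<inter> B"
  obtain c1 where c1: "\<forall>v\<in>A. c1 v < \<omega>" "\<forall>u\<in>A. \<forall>v\<in>A. adj E1 u v \<longrightarrow> c1 u \<noteq> c1 v"
    using co1 unfolding colorable_on_def by blast
  obtain c2 where c2: "\<forall>v\<in>B. c2 v < \<omega>" "\<forall>u\<in>B. \<forall>v\<in>B. adj E2 u v \<longrightarrow> c2 u \<noteq> c2 v"
    using co2 unfolding colorable_on_def by blast
  have i1: "inj_on c1 ?Q" by (rule clique_color_inj[OF c1(2) cl1]) auto
  have i2: "inj_on c2 ?Q" by (rule clique_color_inj[OF c2(2) cl2]) auto
  define g0 where "g0 = c1 \<circ> inv_into ?Q c2"
  have g0: "bij_betw g0 (c2 ` ?Q) (c1 ` ?Q)"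
  proof -
    have "bij_betw (inv_into ?Q c2) (c2 ` ?Q) ?Q" using i2 by (simp add: bij_betw_inv_into inj_on_imp_bij_betw)
    moreover have "bij_betw c1 ?Q (c1 ` ?Q)" using i1 by (simp add: inj_on_imp_bij_betw)
    ultimately show ?thesis unfolding g0_def by (rule bij_betw_trans)
  qed
  have s1: "c1 ` ?Q \<subseteq> {..<\<omega>}" and s2: "c2 ` ?Q \<subseteq> {..<\<omega>}" using c1 c2 by auto
  have "card ({..<\<omega>} - c2 ` ?Q) = card ({..<\<omega>} - c1 ` ?Q)"
    using s1 s2 card_image[OF i1] card_image[OF i2] fin
    by (simp add: card_Diff_subset finite_subset)
  then obtain g1 where g1: "bij_betw g1 ({..<\<omega>} - c2 ` ?Q) ({..<\<omega>} - c1 ` ?Q)"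
    using finite_same_card_bij by blast
  define \<pi> where "\<pi> y = (if y \<in> c2 ` ?Q then g0 y else g1 y)" for y
  have \<pi>range: "\<And>y. y < \<omega> \<Longrightarrow> \<pi> y < \<omega>"
  proof -
    fix y :: nat assume y: "y < \<omega>"
    show "\<pi> y < \<omega>"
    proof (cases "y \<in> c2 ` ?Q")
      case True
      then have "g0 y \<in> c1 ` ?Q" using g0 unfolding bij_betw_def by blast
      then show ?thesis using True s1 unfolding \<pi>_def by auto
    next
      case False
      then have "g1 y \<in> {..<\<omega>} - c1 ` ?Q" using g1 y unfolding bij_betw_def by blast
      then show ?thesis using False unfolding \<pi>_def by auto
    qed
  qed
  have \<pi>inj: "inj_on \<pi> {..<\<omega>}"
  proof (rule inj_onI)
    fix y z assume y: "y \<in> {..<\<omega>}" and z: "z \<in> {..<\<omega>}" and eq: "\<pi> y = \<pi> z"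
    show "y = z"
    proof (cases "y \<in> c2 ` ?Q"; cases "z \<in> c2 ` ?Q")
      assume "y \<in> c2 ` ?Q" "z \<in> c2 ` ?Q"
      then show ?thesis using eq g0 unfolding \<pi>_def bij_betw_def inj_on_def by auto
    next
      assume "y \<notin> c2 ` ?Q" "z \<notin> c2 ` ?Q"
      then show ?thesis using eq g1 y z unfolding \<pi>_def bij_betw_def inj_on_def by auto
    next
      assume a: "y \<in> c2 ` ?Q" "z \<notin> c2 ` ?Q"
      then have "\<pi> y \<in> c1 ` ?Q" "\<pi> z \<notin> c1 ` ?Q" using g0 g1 z unfolding \<pi>_def bij_betw_def by auto
      then show ?thesis using eq by simp
    next
      assume a: "y \<notin> c2 ` ?Q" "z \<in> c2 ` ?Q"
      then have "\<pi> z \<in> c1 ` ?Q" "\<pi> y \<notin> c1 ` ?Q" using g0 g1 y unfolding \<pi>_def bij_betw_def by auto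
      then show ?thesis using eq by simp
    qed
  qed
  define c where "c v = (if v \<in> A then c1 v else \<pi> (c2 v))" for v
  have cB: "\<And>v. v \<in> B \<Longrightarrow> c v = \<pi> (c2 v)"
  proof -
    fix v assume v: "v \<in> B"
    show "c v = \<pi> (c2 v)"
    proof (cases "v \<in> A")
      case True
      then have "v \<in> ?Q" using v by simp
      then have "\<pi> (c2 v) = c1 v" unfolding \<pi>_def g0_def using i2 by (simp add: inv_into_f_f)
      then show ?thesis unfolding c_def using True by simp
    qed (simp add: c_def)
  qed
  have "\<forall>v\<in>A \<union> B. c v < \<omega>"
    using c1(1) c2(1) \<pi>range cB unfolding c_def by auto
  moreover have "\<forall>u\<in>A \<union> B. \<forall>v\<in>A \<union> B. adj (E1 \<union> E2) u v \<longrightarrow> c u \<noteq> c v"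
  proof (intro ballI impI)
    fix u v assume "adj (E1 \<union> E2) u v"
    then consider "adj E1 u v" | "adj E2 u v" by (auto simp: adj_Un)
    then show "c u \<noteq> c v"
    proof cases
      case 1
      then have "u \<in> A" "v \<in> A" using adj_in_edges[OF E1] by auto
      then show ?thesis using c1(2) 1 unfolding c_def by auto
    next
      case 2
      then have uv: "u \<in> B" "v \<in> B" using adj_in_edges[OF E2] by auto
      then have "c2 u \<noteq> c2 v" "c2 u < \<omega>" "c2 v < \<omega>" using c2 2 by auto
      then have "\<pi> (c2 u) \<noteq> \<pi> (c2 v)" using \<pi>inj unfolding inj_on_def by blast
      then show ?thesis using cB uv by simp
    qed
  qed
  ultimately show ?thesis unfolding colorable_on_def by blast
qed

lemma simplicial_local:
  assumes "v \<in> W \<longleftrightarrow> v \<in> W'"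
    and "\<And>u. (u \<in> W \<and> adj E u v) \<longleftrightarrow> (u \<in> W' \<and> adj E' u v)"
    and "\<And>a b. a \<in> W' \<Longrightarrow> b \<in> W' \<Longrightarrow> adj E' a v \<Longrightarrow> adj E' b v \<Longrightarrow> adj E a b \<longleftrightarrow> adj E' a b"
  shows "simplicial E W v \<longleftrightarrow> simplicial E' W' v"
proof -
  have eq: "{u \<in> W. adj E u v} = {u \<in> W'. adj E' u v}" using assms(2) by blast
  have "is_clique E {u \<in> W'. adj E' u v} \<longleftrightarrow> is_clique E' {u \<in> W'. adj E' u v}"
    unfolding is_clique_def using assms(3) by auto
  then show ?thesis unfolding simplicial_def eq using assms(1) by simp
qed

locale split_setting =
  fixes E :: "nat set set" and X L K M :: "nat set"
  assumes disjXL: "X \<inter> L = {}" and disjK: "K \<inter> (X \<union> L) = {}" and disjM: "M \<inter> (X \<union> L) = {}"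
    and disjKM: "K \<inter> M = {}"
    and Eedges: "E \<subseteq> edges (X \<union> L \<union> K \<union> M)"
    and nocross: "\<And>u w. u \<in> K \<Longrightarrow> w \<in> M \<Longrightarrow> \<not> adj E u w"
    and cliqQ: "is_clique E (X \<union> L)"
begin

abbreviation "Q \<equiv> X \<union> L"
abbreviation "V \<equiv> X \<union> L \<union> K \<union> M"
abbreviation "E1 \<equiv> restr E (X \<union> L \<union> K)"
abbreviation "E2 \<equiv> restr E (X \<union> L \<union> M)"
abbreviation "R i \<equiv> remain E X V i"
abbreviation "R1 i \<equiv> remain E1 X (X \<union> L \<union> K) i"
abbreviation "R2 i \<equiv> remain E2 (X \<union> L) (X \<union> L \<union> M) i"

lemma adjV: "adj E u v \<Longrightarrow> u \<in> V \<and> v \<in> V"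
  using adj_in_edges[OF Eedges] by blast

lemma adjK: "v \<in> K \<Longrightarrow> adj E u v \<Longrightarrow> u \<in> X \<union> L \<union> K"
  using adjV nocross adj_sym by blast

lemma adjM: "v \<in> M \<Longrightarrow> adj E u v \<Longrightarrow> u \<in> X \<union> L \<union> M"
  using adjV nocross adj_sym by blast

lemma E_split: "E = E1 \<union> E2"
proof
  show "E \<subseteq> E1 \<union> E2"
  proof
    fix e assume e: "e \<in> E"
    then obtain u v where uv: "e = {u, v}" "u \<noteq> v" "u \<in> V" "v \<in> V" using Eedges unfolding edges_def by blast
    then have a: "adj E u v" using e unfolding adj_def by simp
    show "e \<in> E1 \<union> E2"
    proof (cases "u \<in> K \<or> v \<in> K")
      case True
      then have "u \<in> X \<union> L \<union> K" "v \<in> X \<union> L \<union> K" using adjK a adj_sym uv by blast+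
      then show ?thesis using e uv unfolding restr_def by auto
    next
      case False
      then show ?thesis using e uv unfolding restr_def by auto
    qed
  qed
qed (auto simp: restr_def)

lemma R_sub: "R i \<subseteq> V" and R1_sub: "R1 i \<subseteq> X \<union> L \<union> K" and R2_sub: "R2 i \<subseteq> X \<union> L \<union> M"
  by (rule remain_subset)+

lemma X_R: "X \<subseteq> R i" and X_R1: "X \<subseteq> R1 i" and Q_R2: "X \<union> L \<subseteq> R2 i"
  using remain_X[of X V E i] remain_X[of X "X \<union> L \<union> K" E1 i] remain_X[of "X \<union> L" "X \<union> L \<union> M" E2 i]
  by auto

lemma sim: "L \<subseteq> R i \<Longrightarrow> L \<subseteq> R1 i \<Longrightarrow> R i = R1 i \<union> R2 i"
proof (induction i)
  case 0 then show ?case by auto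
next
  case (Suc i)
  have LRi: "L \<subseteq> R i" "L \<subseteq> R1 i" using Suc.prems remain_Suc_subset by blast+
  have IH: "R i = R1 i \<union> R2 i" using Suc.IH LRi by blast
  have QR1: "X \<union> L \<subseteq> R1 i" using X_R1 LRi by blast
  have RK: "\<And>u. u \<in> X \<union> L \<union> K \<Longrightarrow> u \<in> R i \<longleftrightarrow> u \<in> R1 i"
    using IH R2_sub QR1 disjK disjKM by blast
  have RM: "\<And>u. u \<in> X \<union> L \<union> M \<Longrightarrow> u \<in> R i \<longleftrightarrow> u \<in> R2 i"
    using IH R1_sub Q_R2 disjM disjKM by blast
  show ?case
  proof (rule set_eqI)
    fix v
    show "v \<in> R (Suc i) \<longleftrightarrow> v \<in> R1 (Suc i) \<union> R2 (Suc i)"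
    proof (cases "v \<in> V")
      case False
      then show ?thesis using R_sub[of "Suc i"] R1_sub[of "Suc i"] R2_sub[of "Suc i"] by blast
    next
      case vV: True
      consider "v \<in> X" | "v \<in> L" | "v \<in> K" | "v \<in> M" using vV by blast
      then show ?thesis
      proof cases
        case 1 then show ?thesis using X_R[of "Suc i"] X_R1[of "Suc i"] by blast
      next
        case 2 then show ?thesis using Suc.prems by blast
      next
        case 3
        have vnX: "v \<notin> X" using 3 disjK by blast
        have nR2: "\<And>j. v \<notin> R2 j" using 3 R2_sub disjK disjKM by blast
        have "simplicial E (R i) v \<longleftrightarrow> simplicial E1 (R1 i) v"
        proof (rule simplicial_local)
          show "v \<in> R i \<longleftrightarrow> v \<in> R1 i" using RK 3 by blast
          show "\<And>u. (u \<in> R i \<and> adj E u v) \<longleftrightarrow> (u \<in> R1 i \<and> adj E1 u v)"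
            using RK adjK[OF 3] 3 by (auto simp: adj_restr)
          show "\<And>a b. a \<in> R1 i \<Longrightarrow> b \<in> R1 i \<Longrightarrow> adj E1 a v \<Longrightarrow> adj E1 b v \<Longrightarrow> adj E a b \<longleftrightarrow> adj E1 a b"
            using R1_sub by (auto simp: adj_restr)
        qed
        then show ?thesis using RK[of v] 3 vnX nR2[of "Suc i"] remain_Suc_mem[of v E X V i]
            remain_Suc_mem[of v E1 X "X \<union> L \<union> K" i] by blast
      next
        case 4
        have vnQ: "v \<notin> X \<union> L" using 4 disjM by blast
        have nR1: "\<And>j. v \<notin> R1 j" using 4 R1_sub disjM disjKM by blast
        have "simplicial E (R i) v \<longleftrightarrow> simplicial E2 (R2 i) v"
        proof (rule simplicial_local)
          show "v \<in> R i \<longleftrightarrow> v \<in> R2 i" using RM 4 by blast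
          show "\<And>u. (u \<in> R i \<and> adj E u v) \<longleftrightarrow> (u \<in> R2 i \<and> adj E2 u v)"
            using RM adjM[OF 4] 4 by (auto simp: adj_restr)
          show "\<And>a b. a \<in> R2 i \<Longrightarrow> b \<in> R2 i \<Longrightarrow> adj E2 a v \<Longrightarrow> adj E2 b v \<Longrightarrow> adj E a b \<longleftrightarrow> adj E2 a b"
            using R2_sub by (auto simp: adj_restr)
        qed
        then show ?thesis using RM[of v] 4 vnQ nR1[of "Suc i"] remain_Suc_mem[of v E X V i]
            remain_Suc_mem[of v E2 "X \<union> L" "X \<union> L \<union> M" i] by blast
      qed
    qed
  qed
qed

end

definition FS :: "nat \<Rightarrow> nat \<Rightarrow> nat set \<Rightarrow> nat set \<Rightarrow> nat set \<Rightarrow> nat set set set" where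
  "FS \<omega> t X L V = {E. E \<subseteq> edges V \<and> connected_on E V \<and> chordal_on E V \<and> colorable_on \<omega> E V
     \<and> is_clique E X \<and> evap_time E X V t \<and> connected_on E (V - X)
     \<and> layer E X V t = L \<and> is_clique E (X \<union> L)}"

definition FT :: "nat \<Rightarrow> nat \<Rightarrow> nat set \<Rightarrow> nat set \<Rightarrow> nat set \<Rightarrow> nat set set set" where
  "FT \<omega> t X L V = {E. E \<in> FS \<omega> t X L V \<and> X \<union> L \<subset> V
     \<and> (\<forall>C \<in> components E (V - (X \<union> L)). set_evap_time E X V C (t - 1))}"

definition GS :: "nat \<Rightarrow> nat \<Rightarrow> nat set \<Rightarrow> nat set \<Rightarrow> nat set \<Rightarrow> nat set set set" where
  "GS \<omega> s Y Z V = {E. E \<subseteq> edges V \<and> connected_on E V \<and> chordal_on E V \<and> colorable_on \<omega> E V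
     \<and> is_clique E Y \<and> (\<exists>t \<le> s. evap_time E Y V t)
     \<and> (\<forall>C \<in> components E (V - Y). \<exists>u\<in>C. \<exists>w \<in> Y - Z. adj E u w)}"

lemma f_count_FS: "f_count \<omega> t x l k = card (FS \<omega> t {1..x} {x+1..x+l} {1..x+l+k})"
  unfolding f_count_def FS_def good_graph_def all_edges_eq by (rule arg_cong[where f=card]) blast

lemma ftilde_count_FT: "ftilde_count \<omega> t x l k = card (FT \<omega> t {1..x} {x+1..x+l} {1..x+l+k})"
  unfolding ftilde_count_def FT_def FS_def good_graph_def all_edges_eq by (rule arg_cong[where f=card]) blast

lemma g_count_GS: "g_count \<omega> s y k z = card (GS \<omega> s {1..y} {1..z} {1..y+k})"
  unfolding g_count_def GS_def good_graph_def all_edges_eq by (rule arg_cong[where f=card]) blast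

lemma finite_FS: "finite V \<Longrightarrow> finite (FS \<omega> t X L V)"
  by (rule finite_subset[of _ "Pow (edges V)"]) (auto simp: FS_def finite_edges)

lemma finite_FT: "finite V \<Longrightarrow> finite (FT \<omega> t X L V)"
  by (rule finite_subset[of _ "Pow (edges V)"]) (auto simp: FT_def FS_def finite_edges)

lemma finite_GS: "finite V \<Longrightarrow> finite (GS \<omega> s Y Z V)"
  by (rule finite_subset[of _ "Pow (edges V)"]) (auto simp: GS_def finite_edges)

lemma fix_image: "(\<And>q. q \<in> Q \<Longrightarrow> h q = q) \<Longrightarrow> S \<subseteq> Q \<Longrightarrow> h ` S = S"
  by (auto simp: image_iff subset_iff)

lemma FS_transfer:
  assumes inj: "inj_on h V" and hfix: "\<And>q. q \<in> X \<union> L \<Longrightarrow> h q = q" and QV: "X \<union> L \<subseteq> V"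
    and E: "E \<in> FS \<omega> t X L V"
  shows "imgE h E \<in> FS \<omega> t X L (h ` V)"
proof -
  have Ee: "E \<subseteq> edges V" using E unfolding FS_def by blast
  have hX: "h ` X = X" and hL: "h ` L = L" and hQ: "h ` (X \<union> L) = X \<union> L"
    using fix_image[of "X \<union> L" h, OF hfix] by auto
  have hVX: "h ` (V - X) = h ` V - X"
    using image_diff_inj[OF inj order_refl, of X] QV hX by auto
  show ?thesis
    using E unfolding FS_def
    using imgE_edges[OF inj Ee] connected_imgE[OF inj Ee order_refl] chordal_imgE[OF inj Ee]
      colorable_imgE[OF inj Ee] clique_imgE[OF inj Ee, of X] clique_imgE[OF inj Ee, of "X \<union> L"]
      evap_time_imgE[OF inj Ee, of X t] layer_imgE[OF inj Ee, of X t]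
      connected_imgE[OF inj Ee, of "V - X"] hX hQ hL hVX QV
    by auto
qed

lemma FT_transfer:
  assumes inj: "inj_on h V" and hfix: "\<And>q. q \<in> X \<union> L \<Longrightarrow> h q = q" and QV: "X \<union> L \<subseteq> V"
    and E: "E \<in> FT \<omega> t X L V"
  shows "imgE h E \<in> FT \<omega> t X L (h ` V)"
proof -
  have E0: "E \<in> FS \<omega> t X L V" using E unfolding FT_def by blast
  have Ee: "E \<subseteq> edges V" using E0 unfolding FS_def by blast
  have hX: "h ` X = X" and hQ: "h ` (X \<union> L) = X \<union> L"
    using fix_image[of "X \<union> L" h, OF hfix] by auto
  have hVQ: "h ` (V - (X \<union> L)) = h ` V - (X \<union> L)"
    using image_diff_inj[OF inj order_refl, of "X \<union> L"] QV hQ by auto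
  have sub: "X \<union> L \<subset> h ` V"
  proof -
    have "X \<union> L \<subset> V" using E unfolding FT_def by blast
    then obtain v where "v \<in> V" "v \<notin> X \<union> L" by blast
    then have "h v \<notin> X \<union> L" using inj QV hQ by (metis inj_on_image_mem_iff)
    then show ?thesis using QV hQ \<open>v \<in> V\<close> by blast
  qed
  have comps: "\<forall>C \<in> components (imgE h E) (h ` V - (X \<union> L)). set_evap_time (imgE h E) X (h ` V) C (t - 1)"
  proof
    fix C' assume "C' \<in> components (imgE h E) (h ` V - (X \<union> L))"
    then obtain C where C: "C \<in> components E (V - (X \<union> L))" "C' = h ` C"
      using components_imgE[OF inj Ee, of "V - (X \<union> L)"] hVQ by auto
    have CV: "C \<subseteq> V" using components_ne[OF C(1)] by blast
    have "set_evap_time E X V C (t - 1)" using E C(1) unfolding FT_def by blast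
    then show "set_evap_time (imgE h E) X (h ` V) C' (t - 1)"
      using set_evap_time_imgE[OF inj Ee _ CV, of X "t - 1"] QV hX C(2) by auto
  qed
  show ?thesis unfolding FT_def using FS_transfer[OF assms(1-3) E0] sub comps by blast
qed

lemma GS_transfer:
  assumes inj: "inj_on h V" and hfix: "\<And>q. q \<in> Y \<Longrightarrow> h q = q" and YV: "Y \<subseteq> V"
    and E: "E \<in> GS \<omega> s Y Z V"
  shows "imgE h E \<in> GS \<omega> s Y Z (h ` V)"
proof -
  have Ee: "E \<subseteq> edges V" using E unfolding GS_def by blast
  have hY: "h ` Y = Y" using fix_image[of Y h, OF hfix] by auto
  have hVY: "h ` (V - Y) = h ` V - Y"
    using image_diff_inj[OF inj order_refl, of Y] YV hY by auto
  have ev: "\<exists>t \<le> s. evap_time (imgE h E) Y (h ` V) t"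
    using E evap_time_imgE[OF inj Ee YV] hY unfolding GS_def by auto
  have comps: "\<forall>C \<in> components (imgE h E) (h ` V - Y). \<exists>u\<in>C. \<exists>w \<in> Y - Z. adj (imgE h E) u w"
  proof
    fix C' assume "C' \<in> components (imgE h E) (h ` V - Y)"
    then obtain C where C: "C \<in> components E (V - Y)" "C' = h ` C"
      using components_imgE[OF inj Ee, of "V - Y"] hVY by auto
    have CV: "C \<subseteq> V" using components_ne[OF C(1)] by blast
    obtain u w where uw: "u \<in> C" "w \<in> Y - Z" "adj E u w" using E C(1) unfolding GS_def by blast
    then have "adj (imgE h E) (h u) (h w)" using adj_imgE[OF inj Ee] CV YV by blast
    moreover have "h w = w" using hfix uw by blast
    ultimately show "\<exists>u\<in>C'. \<exists>w \<in> Y - Z. adj (imgE h E) u w" using uw C(2) by force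
  qed
  show ?thesis using E unfolding GS_def
    using imgE_edges[OF inj Ee] connected_imgE[OF inj Ee order_refl] chordal_imgE[OF inj Ee]
      colorable_imgE[OF inj Ee] clique_imgE[OF inj Ee YV] hY ev comps by auto
qed

lemma imgE_comp_id:
  assumes "\<And>y. y \<in> W \<Longrightarrow> h (g y) = y" "E \<subseteq> edges W"
  shows "imgE h (imgE g E) = E"
proof -
  have "\<And>e. e \<in> E \<Longrightarrow> h ` g ` e = e"
  proof -
    fix e assume "e \<in> E"
    then have "e \<subseteq> W" using assms(2) unfolding edges_def by auto
    then show "h ` g ` e = e" using assms(1) by (force simp: image_image)
  qed
  then show ?thesis unfolding imgE_def by (simp add: image_image)
qed

lemma card_transfer:
  fixes P :: "nat set \<Rightarrow> nat set set set"
  assumes tr: "\<And>h V E. inj_on h V \<Longrightarrow> (\<And>q. q \<in> Q \<Longrightarrow> h q = q) \<Longrightarrow> Q \<subseteq> V \<Longrightarrow> E \<in> P V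
        \<Longrightarrow> imgE h E \<in> P (h ` V)"
    and ed: "\<And>V E. E \<in> P V \<Longrightarrow> E \<subseteq> edges V"
    and bij: "bij_betw h V V'" and hfix: "\<And>q. q \<in> Q \<Longrightarrow> h q = q" and QV: "Q \<subseteq> V"
  shows "card (P V) = card (P V')"
proof -
  have inj: "inj_on h V" and hV: "h ` V = V'" using bij unfolding bij_betw_def by auto
  let ?g = "inv_into V h"
  have ginj: "inj_on ?g V'" using inj_inv[OF inj] hV by simp
  have gV: "?g ` V' = V" using inv_image_back[OF inj order_refl] hV by simp
  have gfix: "\<And>q. q \<in> Q \<Longrightarrow> ?g q = q"
    using hfix QV inj by (metis inv_into_f_f subsetD)
  have QV': "Q \<subseteq> V'" using fix_image[of Q h, OF hfix order_refl] QV hV by blast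
  show ?thesis
  proof (rule bij_betw_same_card[of "imgE h"], rule bij_betw_byWitness[where f'="imgE ?g"])
    show "\<forall>E\<in>P V. imgE ?g (imgE h E) = E" using imgE_inv[OF inj] ed by blast
    show "\<forall>E\<in>P V'. imgE h (imgE ?g E) = E"
    proof
      fix E assume "E \<in> P V'"
      then have "E \<subseteq> edges V'" by (rule ed)
      moreover have "\<And>y. y \<in> V' \<Longrightarrow> h (?g y) = y" using hV by (metis f_inv_into_f)
      ultimately show "imgE h (imgE ?g E) = E" using imgE_comp_id by blast
    qed
    show "imgE h ` P V \<subseteq> P V'" using tr[OF inj hfix QV] hV by blast
    show "imgE ?g ` P V' \<subseteq> P V"
    proof
      fix E' assume "E' \<in> imgE ?g ` P V'"
      then obtain E where E: "E \<in> P V'" "E' = imgE ?g E" by blast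
      have "imgE ?g E \<in> P (?g ` V')" by (rule tr[of ?g V' E]) (use ginj gfix QV' E in auto)
      then show "E' \<in> P V" using gV E by simp
    qed
  qed
qed

lemma nonsimp_witness:
  assumes "v \<in> W" "\<not> simplicial E W v"
  shows "\<exists>a b. a \<in> W \<and> b \<in> W \<and> adj E a v \<and> adj E b v \<and> a \<noteq> b \<and> \<not> adj E a b"
  using assms unfolding simplicial_def is_clique_def by blast

lemma nonsimp_intro:
  assumes "a \<in> W" "b \<in> W" "adj E a v" "adj E b v" "a \<noteq> b" "\<not> adj E a b"
  shows "\<not> simplicial E W v"
  using assms unfolding simplicial_def is_clique_def by blast

lemma remain_Suc_notin: "v \<in> remain E X V (Suc i) \<Longrightarrow> v \<notin> X \<Longrightarrow> \<not> simplicial E (remain E X V i) v"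
  by auto

context split_setting
begin

lemma R1_in_R: "L \<subseteq> R i \<Longrightarrow> L \<subseteq> R1 i \<Longrightarrow> a \<in> X \<union> L \<union> K \<Longrightarrow> a \<in> R i \<longleftrightarrow> a \<in> R1 i"
  using sim[of i] R2_sub[of i] X_R1[of i] disjK disjKM by blast

lemma R2_in_R: "L \<subseteq> R i \<Longrightarrow> L \<subseteq> R1 i \<Longrightarrow> a \<in> X \<union> L \<union> M \<Longrightarrow> a \<in> R i \<longleftrightarrow> a \<in> R2 i"
  using sim[of i] R1_sub[of i] Q_R2[of i] disjM disjKM by blast

lemma dirA_R1:
  assumes t2: "2 \<le> t" and LR: "\<And>i. i \<le> t - 1 \<Longrightarrow> L \<subseteq> R i" and RM: "R (t - 2) \<inter> M = {}"
  shows "i \<le> t - 1 \<Longrightarrow> L \<subseteq> R1 i"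
proof (induction i)
  case 0 then show ?case by auto
next
  case (Suc i)
  have IH: "L \<subseteq> R1 i" using Suc by simp
  have LRi: "L \<subseteq> R i" using LR Suc.prems by simp
  show ?case
  proof
    fix v assume vL: "v \<in> L"
    have vnX: "v \<notin> X" using vL disjXL by blast
    have st: "Suc (t - 2) = t - 1" using t2 by simp
    have "v \<in> R (t - 1)" using LR[of "t - 1"] vL by blast
    then have "v \<in> R (Suc (t - 2))" unfolding st .
    then have ns: "\<not> simplicial E (R (t - 2)) v" and vR: "v \<in> R (t - 2)"
      using remain_Suc_notin[of v E X V "t - 2"] vnX remain_Suc_subset[of E X V "t - 2"] by blast+
    obtain a b where ab: "a \<in> R (t - 2)" "b \<in> R (t - 2)" "adj E a v" "adj E b v" "a \<noteq> b" "\<not> adj E a b"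
      using nonsimp_witness[OF vR ns] by blast
    have sub: "R (t - 2) \<subseteq> R i" using remain_antimono Suc.prems by simp
    have "a \<in> X \<union> L \<union> K" "b \<in> X \<union> L \<union> K" using ab RM R_sub[of "t - 2"] by blast+
    then have "a \<in> R1 i" "b \<in> R1 i" using R1_in_R[OF LRi IH] ab sub by blast+
    moreover have "adj E1 a v" "adj E1 b v" "\<not> adj E1 a b"
      using ab \<open>a \<in> X \<union> L \<union> K\<close> \<open>b \<in> X \<union> L \<union> K\<close> vL by (auto simp: adj_restr)
    ultimately have "\<not> simplicial E1 (R1 i) v" using nonsimp_intro ab by blast
    then show "v \<in> R1 (Suc i)" using IH vL vnX remain_Suc_mem[of v E1 X "X \<union> L \<union> K" i] by blast
  qed
qed

lemma dirB_R:
  assumes LR1: "\<And>i. i \<le> t - 1 \<Longrightarrow> L \<subseteq> R1 i"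
  shows "i \<le> t - 1 \<Longrightarrow> L \<subseteq> R i"
proof (induction i)
  case 0 then show ?case by auto
next
  case (Suc i)
  have IH: "L \<subseteq> R i" using Suc by simp
  have LR1i: "L \<subseteq> R1 i" using LR1 Suc.prems by simp
  show ?case
  proof
    fix v assume vL: "v \<in> L"
    have vnX: "v \<notin> X" using vL disjXL by blast
    have "v \<in> R1 (Suc i)" using LR1[of "Suc i"] Suc.prems vL by blast
    then have ns: "\<not> simplicial E1 (R1 i) v" and vR: "v \<in> R1 i"
      using remain_Suc_notin[of v E1 X "X \<union> L \<union> K" i] vnX remain_Suc_subset[of E1 X "X \<union> L \<union> K" i] by blast+
    obtain a b where ab: "a \<in> R1 i" "b \<in> R1 i" "adj E1 a v" "adj E1 b v" "a \<noteq> b" "\<not> adj E1 a b"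
      using nonsimp_witness[OF vR ns] by blast
    have "a \<in> X \<union> L \<union> K" "b \<in> X \<union> L \<union> K" using ab R1_sub[of i] by blast+
    then have "a \<in> R i" "b \<in> R i" using R1_in_R[OF IH LR1i] ab by blast+
    moreover have "adj E a v" "adj E b v" "\<not> adj E a b"
      using ab \<open>a \<in> X \<union> L \<union> K\<close> \<open>b \<in> X \<union> L \<union> K\<close> by (auto simp: adj_restr)
    ultimately have "\<not> simplicial E (R i) v" using nonsimp_intro ab by blast
    then show "v \<in> R (Suc i)" using IH vL vnX remain_Suc_mem[of v E X V i] by blast
  qed
qed

end

lemma comp_nbr:
  assumes conn: "connected_on E W" and TW: "T \<subseteq> W" and ne: "W - T \<noteq> {}"
    and C: "C \<in> components E T"
  shows "\<exists>u\<in>C. \<exists>s\<in>W - T. adj E u s"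
proof -
  obtain c where c: "c \<in> C" using components_ne[OF C] by blast
  have CT: "C \<subseteq> T" using components_ne[OF C] by blast
  obtain s where s: "s \<in> W - T" using ne by blast
  obtain u w where uw: "u \<in> C" "w \<in> W - C" "adj E u w"
    using cut_edge[OF conn _ c, of s] CT TW s by blast
  have "w \<notin> T" using components_closed[OF C uw(1) _ uw(3)] uw(2) by blast
  then show ?thesis using uw by blast
qed

lemma conn_via_core:
  assumes SW: "S \<subseteq> W" and Sne: "S \<noteq> {}" and cl: "is_clique E S" and TW: "T \<subseteq> W"
    and cover: "W \<subseteq> S \<union> T"
    and nb: "\<And>w. w \<in> T \<Longrightarrow> \<exists>u\<in>component E T w. \<exists>s\<in>S. adj E u s"
  shows "connected_on E W"
proof (rule connected_from_core[OF SW Sne cl])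
  fix w assume w: "w \<in> W"
  show "\<exists>s\<in>S. (w, s) \<in> (adj_rel E W)\<^sup>*"
  proof (cases "w \<in> S")
    case True then show ?thesis by blast
  next
    case False
    then have wT: "w \<in> T" using w cover by blast
    obtain u s where us: "u \<in> component E T w" "s \<in> S" "adj E u s" using nb[OF wT] by blast
    have "(w, u) \<in> (adj_rel E T)\<^sup>*" using us(1) unfolding component_def by blast
    then have "(w, u) \<in> (adj_rel E W)\<^sup>*" using adj_rel_rtrancl_mono[OF TW] by blast
    moreover have "(u, s) \<in> adj_rel E W" using us component_subset TW SW unfolding adj_rel_def by blast
    ultimately show ?thesis using us(2) by (meson rtrancl.rtrancl_into_rtrancl)
  qed
qed

lemma simplicial_clique: "is_clique E W \<Longrightarrow> v \<in> W \<Longrightarrow> simplicial E W v"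
  unfolding simplicial_def is_clique_def by blast

lemma evap_basic:
  assumes ev: "evap_time E X V t" and lay: "layer E X V t = L" and t1: "1 \<le> t"
  shows "remain E X V t = X" "remain E X V (t - 1) = X \<union> L"
proof -
  show Rt: "remain E X V t = X" using ev unfolding evap_time_def by blast
  have "remain E X V t \<subseteq> remain E X V (t - 1)" using remain_antimono by simp
  then show "remain E X V (t - 1) = X \<union> L" using lay Rt unfolding layer_def by blast
qed

lemma evap_exists:
  assumes "remain E X V s = X" shows "\<exists>t \<le> s. evap_time E X V t"
proof -
  define t where "t = (LEAST i. remain E X V i = X)"
  have "remain E X V t = X" unfolding t_def by (rule LeastI[of _ s]) (rule assms)
  moreover have "t \<le> s" unfolding t_def by (rule Least_le) (rule assms)
  moreover have "\<forall>i<t. remain E X V i \<noteq> X" unfolding t_def using not_less_Least by blast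
  ultimately show ?thesis unfolding evap_time_def by blast
qed

context split_setting
begin

lemma setQK: "(X \<union> L \<union> K) - (X \<union> L) = K" using disjK by blast
lemma setQM: "(X \<union> L \<union> M) - (X \<union> L) = M" using disjM by blast
lemma setQKX: "(X \<union> L \<union> K) - X = L \<union> K" using disjK disjXL by blast
lemma setVX: "V - X = L \<union> (K \<union> M)" using disjK disjM disjXL by blast
lemma setVQ: "V - (X \<union> L) = K \<union> M" using disjK disjM by blast

lemma nocross': "u \<in> M \<Longrightarrow> w \<in> K \<Longrightarrow> \<not> adj E u w"
  using nocross adj_sym by blast

lemma comp_K: "v \<in> K \<Longrightarrow> component E (K \<union> M) v = component E1 K v"
proof -
  assume v: "v \<in> K"
  have "component E (K \<union> M) v = component E K v"
    by (rule component_split[OF v]) (use nocross in auto)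
  also have "\<dots> = component E1 K v" by (rule component_cong) (auto simp: adj_restr)
  finally show ?thesis .
qed

lemma comp_M: "v \<in> M \<Longrightarrow> component E (K \<union> M) v = component E2 M v"
proof -
  assume v: "v \<in> M"
  have "component E (M \<union> K) v = component E M v"
    by (rule component_split[OF v]) (use nocross' in auto)
  also have "\<dots> = component E2 M v" by (rule component_cong) (auto simp: adj_restr)
  finally show ?thesis by (simp add: Un_commute)
qed

lemma compsK: "C \<in> components E1 K \<Longrightarrow> C \<in> components E (K \<union> M) \<and> C \<subseteq> K"
proof -
  assume "C \<in> components E1 K"
  then obtain v where v: "v \<in> K" "C = component E1 K v" unfolding components_def by blast
  then show ?thesis using comp_K[OF v(1)] component_subset unfolding components_def by blast
qed

lemma compsM: "C \<in> components E2 M \<Longrightarrow> C \<in> components E (K \<union> M) \<and> C \<subseteq> M"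
proof -
  assume "C \<in> components E2 M"
  then obtain v where v: "v \<in> M" "C = component E2 M v" unfolding components_def by blast
  then show ?thesis using comp_M[OF v(1)] component_subset unfolding components_def by blast
qed

lemma comps_split: "C \<in> components E (K \<union> M) \<Longrightarrow>
   (C \<subseteq> K \<and> C \<in> components E1 K) \<or> (C \<subseteq> M \<and> C \<in> components E2 M)"
proof -
  assume "C \<in> components E (K \<union> M)"
  then obtain v where v: "v \<in> K \<union> M" "C = component E (K \<union> M) v" unfolding components_def by blast
  show ?thesis
  proof (cases "v \<in> K")
    case True then show ?thesis using v comp_K component_subset unfolding components_def by blast
  next
    case False then have "v \<in> M" using v by blast
    then show ?thesis using v comp_M component_subset unfolding components_def by blast
  qed
qed

lemma LR_sim:
  assumes "\<And>i. i \<le> t - 1 \<Longrightarrow> L \<subseteq> R i" "\<And>i. i \<le> t - 1 \<Longrightarrow> L \<subseteq> R1 i"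
  shows "i \<le> t - 1 \<Longrightarrow> R i = R1 i \<union> R2 i"
  using sim assms by blast

end

context split_setting
begin

lemma E1_edges: "E1 \<subseteq> edges (X \<union> L \<union> K)"
proof -
  have "V \<inter> (X \<union> L \<union> K) = X \<union> L \<union> K" by blast
  then show ?thesis using restr_edges[OF Eedges, of "X \<union> L \<union> K"] by simp
qed
lemma E2_edges: "E2 \<subseteq> edges (X \<union> L \<union> M)"
proof -
  have "V \<inter> (X \<union> L \<union> M) = X \<union> L \<union> M" by blast
  then show ?thesis using restr_edges[OF Eedges, of "X \<union> L \<union> M"] by simp
qed

lemma dirA:
  assumes t2: "2 \<le> t" and E: "E \<in> FS \<omega> t X L V" and Lne: "L \<noteq> {}"
    and RM: "R (t - 2) \<inter> M = {}"
    and Kcomp: "\<And>C. C \<in> components E (K \<union> M) \<Longrightarrow> C \<subseteq> K \<Longrightarrow> C \<inter> R (t - 2) \<noteq> {}"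
    and Kne: "K \<noteq> {}"
  shows "E1 \<in> FT \<omega> t X L (X \<union> L \<union> K)" "E2 \<in> GS \<omega> (t - 2) (X \<union> L) X (X \<union> L \<union> M)"
proof -
  have conn: "connected_on E V" and ch: "chordal_on E V" and co: "colorable_on \<omega> E V"
    and clX: "is_clique E X" and ev: "evap_time E X V t" and connX: "connected_on E (V - X)"
    and lay: "layer E X V t = L"
    using E unfolding FS_def by blast+
  have Rt: "R t = X" and Rt1: "R (t - 1) = X \<union> L" using evap_basic[OF ev lay] t2 by auto
  have LR: "\<And>i. i \<le> t - 1 \<Longrightarrow> L \<subseteq> R i" using Rt1 remain_antimono by blast
  have LR1: "\<And>i. i \<le> t - 1 \<Longrightarrow> L \<subseteq> R1 i" using dirA_R1[OF t2 LR RM] by blast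
  have simA: "\<And>i. i \<le> t - 1 \<Longrightarrow> R i = R1 i \<union> R2 i" using LR_sim[OF LR LR1] by blast
  have R1t1: "R1 (t - 1) = X \<union> L" using simA[of "t - 1"] Rt1 X_R1 LR1[of "t - 1"] by blast
  have cl1: "is_clique E1 (X \<union> L)" using cliqQ unfolding is_clique_def by (auto simp: adj_restr)
  have R1t: "R1 t = X"
  proof -
    have st: "t = Suc (t - 1)" using t2 by simp
    have "R1 (Suc (t - 1)) = X"
    proof -
      have "\<And>v. v \<in> L \<Longrightarrow> simplicial E1 (X \<union> L) v" using simplicial_clique[OF cl1] by blast
      then have "{v \<in> X \<union> L - X. simplicial E1 (X \<union> L) v} = L" using disjXL by blast
      then show ?thesis using R1t1 disjXL by (simp only: remain.simps) blast
    qed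
    then show ?thesis using st by simp
  qed
  have R1ne: "\<And>i. i < t \<Longrightarrow> R1 i \<noteq> X"
  proof
    fix i assume "i < t" "R1 i = X"
    then have "L \<subseteq> X" using LR1[of i] by simp
    then show False using Lne disjXL by blast
  qed
  have ev1: "evap_time E1 X (X \<union> L \<union> K) t" unfolding evap_time_def using R1t R1ne by blast
  have lay1: "layer E1 X (X \<union> L \<union> K) t = L" unfolding layer_def using R1t R1t1 disjXL by blast
  have nbr: "\<And>C. C \<in> components E (K \<union> M) \<Longrightarrow> \<exists>u\<in>C. \<exists>w\<in>L. adj E u w"
  proof -
    fix C assume C: "C \<in> components E (K \<union> M)"
    have c2: "connected_on E (L \<union> (K \<union> M))" using connX setVX by simp
    have d: "(L \<union> (K \<union> M)) - (K \<union> M) = L" using disjK disjM by blast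
    show "\<exists>u\<in>C. \<exists>w\<in>L. adj E u w"
      using comp_nbr[OF c2 _ _ C] d Lne by simp
  qed
  have cl2: "is_clique E2 (X \<union> L)" using cliqQ unfolding is_clique_def by (auto simp: adj_restr)
  have clX1: "is_clique E1 X" using clX unfolding is_clique_def by (auto simp: adj_restr)
  have nbK: "\<And>w. w \<in> K \<Longrightarrow> \<exists>u\<in>component E1 K w. \<exists>s\<in>L. adj E1 u s"
  proof -
    fix w assume w: "w \<in> K"
    have "component E1 K w \<in> components E (K \<union> M)"
      using comp_K[OF w] w unfolding components_def by blast
    then obtain u s where us: "u \<in> component E1 K w" "s \<in> L" "adj E u s" using nbr comp_K[OF w] by metis
    then have "u \<in> K" using component_subset by blast
    then have "adj E1 u s" using us by (auto simp: adj_restr)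
    then show "\<exists>u\<in>component E1 K w. \<exists>s\<in>L. adj E1 u s" using us by blast
  qed
  have conn1: "connected_on E1 (X \<union> L \<union> K)"
    by (rule conn_via_core[of "X \<union> L" _ _ K]) (use cl1 Lne nbK in blast)+
  have conn1X: "connected_on E1 (L \<union> K)"
  proof (rule conn_via_core[of L _ _ K])
    show "is_clique E1 L" using cl1 is_clique_subset by blast
  qed (use Lne nbK in blast)+
  have ch1: "chordal_on E1 (X \<union> L \<union> K)" by (rule chordal_cong[OF ch]) (auto simp: adj_restr)
  have co1: "colorable_on \<omega> E1 (X \<union> L \<union> K)" by (rule colorable_mono[OF co]) (auto simp: adj_restr)
  have FS1: "E1 \<in> FS \<omega> t X L (X \<union> L \<union> K)"
    unfolding FS_def using E1_edges conn1 ch1 co1 clX1 ev1 conn1X lay1 cl1 setQKX by simp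
  have sev: "\<forall>C\<in>components E1 ((X \<union> L \<union> K) - (X \<union> L)). set_evap_time E1 X (X \<union> L \<union> K) C (t - 1)"
  proof
    fix C assume "C \<in> components E1 ((X \<union> L \<union> K) - (X \<union> L))"
    then have C: "C \<in> components E1 K" using setQK by simp
    then have CK: "C \<in> components E (K \<union> M)" "C \<subseteq> K" using compsK by blast+
    obtain u where u: "u \<in> C" "u \<in> R (t - 2)" using Kcomp[OF CK] by blast
    have uK: "u \<in> K" using u CK by blast
    have "u \<in> R1 (t - 2)" using R1_in_R[OF LR[of "t - 2"] LR1[of "t - 2"]] uK u by auto
    moreover have "u \<notin> R1 (t - 1)" using R1t1 uK disjK by blast
    moreover have "t - 1 - 1 = t - 2" by simp
    ultimately have "u \<in> layer E1 X (X \<union> L \<union> K) (t - 1)" unfolding layer_def by simp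
    then have a: "layer E1 X (X \<union> L \<union> K) (t - 1) \<inter> C \<noteq> {}" using u by blast
    have b: "\<forall>j>t - 1. layer E1 X (X \<union> L \<union> K) j \<inter> C = {}"
    proof (intro allI impI)
      fix j assume "j > t - 1"
      then have "R1 (j - 1) \<subseteq> R1 (t - 1)" using remain_antimono by simp
      then have "layer E1 X (X \<union> L \<union> K) j \<subseteq> X \<union> L" using R1t1 unfolding layer_def by blast
      then show "layer E1 X (X \<union> L \<union> K) j \<inter> C = {}" using CK disjK by blast
    qed
    show "set_evap_time E1 X (X \<union> L \<union> K) C (t - 1)"
      unfolding set_evap_time_def using a b t2 by simp
  qed
  have psub: "X \<union> L \<subset> X \<union> L \<union> K" using Kne disjK by blast
  show "E1 \<in> FT \<omega> t X L (X \<union> L \<union> K)" unfolding FT_def using FS1 psub sev by blast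
  have R2t2: "R2 (t - 2) = X \<union> L"
    using simA[of "t - 2"] RM R2_sub[of "t - 2"] Q_R2[of "t - 2"] by auto
  have ev2: "\<exists>t'\<le>t - 2. evap_time E2 (X \<union> L) (X \<union> L \<union> M) t'" by (rule evap_exists[OF R2t2])
  have nbM: "\<And>w. w \<in> M \<Longrightarrow> \<exists>u\<in>component E2 M w. \<exists>s\<in>L. adj E2 u s"
  proof -
    fix w assume w: "w \<in> M"
    have "component E2 M w \<in> components E (K \<union> M)"
      using comp_M[OF w] w unfolding components_def by blast
    then obtain u s where us: "u \<in> component E2 M w" "s \<in> L" "adj E u s" using nbr comp_M[OF w] by metis
    then have "u \<in> M" using component_subset by blast
    then have "adj E2 u s" using us by (auto simp: adj_restr)
    then show "\<exists>u\<in>component E2 M w. \<exists>s\<in>L. adj E2 u s" using us by blast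
  qed
  have conn2: "connected_on E2 (X \<union> L \<union> M)"
    by (rule conn_via_core[of "X \<union> L" _ _ M]) (use cl2 Lne nbM in blast)+
  have ch2: "chordal_on E2 (X \<union> L \<union> M)" by (rule chordal_cong[OF ch]) (auto simp: adj_restr)
  have co2: "colorable_on \<omega> E2 (X \<union> L \<union> M)" by (rule colorable_mono[OF co]) (auto simp: adj_restr)
  have nb2: "\<forall>C\<in>components E2 ((X \<union> L \<union> M) - (X \<union> L)). \<exists>u\<in>C. \<exists>w\<in>(X \<union> L) - X. adj E2 u w"
  proof
    fix C assume "C \<in> components E2 ((X \<union> L \<union> M) - (X \<union> L))"
    then have C: "C \<in> components E2 M" using setQM by simp
    then obtain w where w: "w \<in> M" "C = component E2 M w" unfolding components_def by blast
    obtain u s where "u \<in> C" "s \<in> L" "adj E2 u s" using nbM[OF w(1)] w(2) by blast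
    moreover have "s \<in> (X \<union> L) - X" using \<open>s \<in> L\<close> disjXL by blast
    ultimately show "\<exists>u\<in>C. \<exists>w\<in>(X \<union> L) - X. adj E2 u w" by blast
  qed
  show "E2 \<in> GS \<omega> (t - 2) (X \<union> L) X (X \<union> L \<union> M)"
    unfolding GS_def using E2_edges conn2 ch2 co2 cl2 ev2 nb2 by blast
qed

end

context split_setting
begin

lemma dirB:
  assumes t2: "2 \<le> t" and F1: "E1 \<in> FT \<omega> t X L (X \<union> L \<union> K)"
    and G2: "E2 \<in> GS \<omega> (t - 2) (X \<union> L) X (X \<union> L \<union> M)"
    and Lne: "L \<noteq> {}" and finQ: "finite (X \<union> L)"
  shows "E \<in> FS \<omega> t X L V" "R (t - 2) \<inter> M = {}"
    "\<And>C. C \<in> components E (K \<union> M) \<Longrightarrow> C \<subseteq> K \<Longrightarrow> C \<inter> R (t - 2) \<noteq> {}"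
proof -
  have FS1: "E1 \<in> FS \<omega> t X L (X \<union> L \<union> K)" using F1 unfolding FT_def by blast
  have conn1: "connected_on E1 (X \<union> L \<union> K)" and ch1: "chordal_on E1 (X \<union> L \<union> K)"
    and co1: "colorable_on \<omega> E1 (X \<union> L \<union> K)" and ev1: "evap_time E1 X (X \<union> L \<union> K) t"
    and connX1: "connected_on E1 ((X \<union> L \<union> K) - X)" and lay1: "layer E1 X (X \<union> L \<union> K) t = L"
    and cl1: "is_clique E1 (X \<union> L)"
    using FS1 unfolding FS_def by blast+
  have sev1: "\<forall>C\<in>components E1 K. set_evap_time E1 X (X \<union> L \<union> K) C (t - 1)"
    using F1 setQK unfolding FT_def by simp
  have conn2: "connected_on E2 (X \<union> L \<union> M)" and ch2: "chordal_on E2 (X \<union> L \<union> M)"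
    and co2: "colorable_on \<omega> E2 (X \<union> L \<union> M)" and cl2: "is_clique E2 (X \<union> L)"
    and ev2: "\<exists>t'\<le>t - 2. evap_time E2 (X \<union> L) (X \<union> L \<union> M) t'"
    and nb2: "\<forall>C\<in>components E2 M. \<exists>u\<in>C. \<exists>w\<in>(X \<union> L) - X. adj E2 u w"
    using G2 setQM unfolding GS_def by auto
  have R1t1: "R1 (t - 1) = X \<union> L" using evap_basic[OF ev1 lay1] t2 by auto
  have LR1: "\<And>i. i \<le> t - 1 \<Longrightarrow> L \<subseteq> R1 i" using R1t1 remain_antimono by blast
  have LR: "\<And>i. i \<le> t - 1 \<Longrightarrow> L \<subseteq> R i" using dirB_R[OF LR1] by blast
  have simA: "\<And>i. i \<le> t - 1 \<Longrightarrow> R i = R1 i \<union> R2 i" using LR_sim[OF LR LR1] by blast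
  obtain t' where t': "t' \<le> t - 2" "evap_time E2 (X \<union> L) (X \<union> L \<union> M) t'" using ev2 by blast
  have "R2 t' = X \<union> L" using t'(2) unfolding evap_time_def by blast
  then have R2t2: "R2 (t - 2) = X \<union> L" using remain_antimono[OF t'(1)] Q_R2 by blast
  have "R2 (t - 1) \<subseteq> R2 (t - 2)" using remain_antimono by simp
  then have Rt1: "R (t - 1) = X \<union> L" using simA[of "t - 1"] R1t1 R2t2 Q_R2 by blast
  have Rt: "R t = X"
  proof -
    have st: "t = Suc (t - 1)" using t2 by simp
    have "\<And>v. v \<in> L \<Longrightarrow> simplicial E (X \<union> L) v" using simplicial_clique[OF cliqQ] by blast
    then have "{v \<in> X \<union> L - X. simplicial E (X \<union> L) v} = L" using disjXL by blast
    then have "R (Suc (t - 1)) = X" using Rt1 disjXL by (simp only: remain.simps) blast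
    then show ?thesis using st by simp
  qed
  have Rne: "\<And>i. i < t \<Longrightarrow> R i \<noteq> X"
  proof
    fix i assume "i < t" "R i = X"
    then have "L \<subseteq> X" using LR[of i] by simp
    then show False using Lne disjXL by blast
  qed
  have ev: "evap_time E X V t" unfolding evap_time_def using Rt Rne by blast
  have lay: "layer E X V t = L" unfolding layer_def using Rt Rt1 disjXL by blast
  show RM: "R (t - 2) \<inter> M = {}"
    using simA[of "t - 2"] R1_sub[of "t - 2"] R2t2 disjM disjKM by auto
  show "\<And>C. C \<in> components E (K \<union> M) \<Longrightarrow> C \<subseteq> K \<Longrightarrow> C \<inter> R (t - 2) \<noteq> {}"
  proof -
    fix C assume C: "C \<in> components E (K \<union> M)" and CK: "C \<subseteq> K"
    have "C \<noteq> {}" using components_ne[OF C] by blast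
    then have "C \<in> components E1 K" using comps_split[OF C] CK disjKM by blast
    then have "set_evap_time E1 X (X \<union> L \<union> K) C (t - 1)" using sev1 by blast
    then obtain u where u: "u \<in> layer E1 X (X \<union> L \<union> K) (t - 1)" "u \<in> C"
      unfolding set_evap_time_def by blast
    have "t - 1 - 1 = t - 2" by simp
    then have "u \<in> R1 (t - 2)" using u(1) unfolding layer_def by simp
    then have "u \<in> R (t - 2)" using R1_in_R[OF LR[of "t - 2"] LR1[of "t - 2"]] u(2) CK by auto
    then show "C \<inter> R (t - 2) \<noteq> {}" using u(2) by blast
  qed
  have QK: "(X \<union> L \<union> K) - K = X \<union> L" using disjK by blast
  have QM: "(X \<union> L \<union> M) - M = X \<union> L" using disjM by blast
  have LK: "(L \<union> K) - K = L" using disjK by blast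
  have connX1': "connected_on E1 (L \<union> K)" using connX1 setQKX by simp
  have nbQ: "\<And>w. w \<in> K \<union> M \<Longrightarrow> \<exists>u\<in>component E (K \<union> M) w. \<exists>s\<in>X \<union> L. adj E u s"
  proof -
    fix w assume "w \<in> K \<union> M"
    then consider "w \<in> K" | "w \<in> M" by blast
    then show "\<exists>u\<in>component E (K \<union> M) w. \<exists>s\<in>X \<union> L. adj E u s"
    proof cases
      case 1
      have C: "component E1 K w \<in> components E1 K" using 1 unfolding components_def by blast
      obtain u s where "u \<in> component E1 K w" "s \<in> X \<union> L" "adj E1 u s"
        using comp_nbr[OF conn1 _ _ C] QK Lne by auto
      then show ?thesis using comp_K[OF 1] by (auto simp: adj_restr)
    next
      case 2
      have C: "component E2 M w \<in> components E2 M" using 2 unfolding components_def by blast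
      obtain u s where "u \<in> component E2 M w" "s \<in> X \<union> L" "adj E2 u s"
        using comp_nbr[OF conn2 _ _ C] QM Lne by auto
      then show ?thesis using comp_M[OF 2] by (auto simp: adj_restr)
    qed
  qed
  have nbL: "\<And>w. w \<in> K \<union> M \<Longrightarrow> \<exists>u\<in>component E (K \<union> M) w. \<exists>s\<in>L. adj E u s"
  proof -
    fix w assume "w \<in> K \<union> M"
    then consider "w \<in> K" | "w \<in> M" by blast
    then show "\<exists>u\<in>component E (K \<union> M) w. \<exists>s\<in>L. adj E u s"
    proof cases
      case 1
      have C: "component E1 K w \<in> components E1 K" using 1 unfolding components_def by blast
      obtain u s where "u \<in> component E1 K w" "s \<in> L" "adj E1 u s"
        using comp_nbr[OF connX1' _ _ C] LK Lne by auto
      then show ?thesis using comp_K[OF 1] by (auto simp: adj_restr)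
    next
      case 2
      have C: "component E2 M w \<in> components E2 M" using 2 unfolding components_def by blast
      obtain u s where "u \<in> component E2 M w" "s \<in> (X \<union> L) - X" "adj E2 u s"
        using nb2 C by blast
      moreover have "(X \<union> L) - X = L" using disjXL by blast
      ultimately show ?thesis using comp_M[OF 2] by (auto simp: adj_restr)
    qed
  qed
  have conn: "connected_on E V"
    by (rule conn_via_core[of "X \<union> L" _ _ "K \<union> M"]) (use cliqQ Lne nbQ in blast)+
  have connX: "connected_on E (V - X)"
  proof -
    have "connected_on E (L \<union> (K \<union> M))"
    proof (rule conn_via_core[of L _ _ "K \<union> M"])
      show "is_clique E L" using cliqQ is_clique_subset by blast
    qed (use Lne nbL in blast)+
    then show ?thesis using setVX by simp
  qed
  have AB: "(X \<union> L \<union> K) \<inter> (X \<union> L \<union> M) = X \<union> L" using disjK disjM disjKM by blast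
  have AuB: "(X \<union> L \<union> K) \<union> (X \<union> L \<union> M) = V" by blast
  have ch: "chordal_on E V"
    using chordal_clique_sum[OF ch1 ch2 E1_edges E2_edges] cl1 cl2 AB AuB E_split by simp
  have co: "colorable_on \<omega> E V"
    using colorable_clique_sum[OF co1 co2 E1_edges E2_edges] finQ cl1 cl2 AB AuB E_split by simp
  have clX: "is_clique E X" using cliqQ is_clique_subset by blast
  show "E \<in> FS \<omega> t X L V"
    unfolding FS_def using Eedges conn ch co clX ev connX lay cliqQ by blast
qed

end

definition Kof :: "nat \<Rightarrow> nat set \<Rightarrow> nat set \<Rightarrow> nat set \<Rightarrow> nat set set \<Rightarrow> nat set" where
  "Kof t X L U E = \<Union>{C \<in> components E U. C \<inter> remain E X (X \<union> L \<union> U) (t - 2) \<noteq> {}}"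

lemma Kof_sub: "Kof t X L U E \<subseteq> U"
  unfolding Kof_def using components_ne by blast

lemma Kof_memI: "C \<in> components E U \<Longrightarrow> u \<in> C \<Longrightarrow> C \<inter> remain E X (X \<union> L \<union> U) (t - 2) \<noteq> {}
  \<Longrightarrow> u \<in> Kof t X L U E"
  unfolding Kof_def by blast

lemma Kof_memD: "u \<in> Kof t X L U E \<Longrightarrow> component E U u \<inter> remain E X (X \<union> L \<union> U) (t - 2) \<noteq> {}"
proof -
  assume "u \<in> Kof t X L U E"
  then obtain C where C: "C \<in> components E U" "u \<in> C" "C \<inter> remain E X (X \<union> L \<union> U) (t - 2) \<noteq> {}"
    unfolding Kof_def by blast
  have "C = component E U u" by (rule components_mem[OF C(1,2)])
  then show ?thesis using C(3) by simp
qed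

lemma Kof_nocross:
  assumes u: "u \<in> Kof t X L U E" and w: "w \<in> U - Kof t X L U E"
  shows "\<not> adj E u w"
proof
  assume a: "adj E u w"
  have uU: "u \<in> U" using u Kof_sub by blast
  have C: "component E U u \<in> components E U" using uU unfolding components_def by blast
  have "w \<in> component E U u" using component_closed[OF component_self[OF uU]] w a by blast
  then have "w \<in> Kof t X L U E" using Kof_memI[OF C _ Kof_memD[OF u]] by blast
  then show False using w by blast
qed

lemma Kof_RM: "remain E X (X \<union> L \<union> U) (t - 2) \<inter> (U - Kof t X L U E) = {}"
proof -
  { fix u assume u: "u \<in> U - Kof t X L U E" "u \<in> remain E X (X \<union> L \<union> U) (t - 2)"
    then have uU: "u \<in> U" by blast
    have C: "component E U u \<in> components E U" using uU unfolding components_def by blast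
    have "u \<in> component E U u" by (rule component_self[OF uU])
    then have "u \<in> Kof t X L U E" using Kof_memI[OF C] u(2) by blast
    then have False using u by blast }
  then show ?thesis by blast
qed

lemma Kof_comp:
  assumes C: "C \<in> components E U" and CK: "C \<subseteq> Kof t X L U E"
  shows "C \<inter> remain E X (X \<union> L \<union> U) (t - 2) \<noteq> {}"
proof -
  obtain c where c: "c \<in> C" using components_ne[OF C] by blast
  have Ceq: "C = component E U c" by (rule components_mem[OF C c])
  have "c \<in> Kof t X L U E" using c CK by blast
  then show ?thesis using Kof_memD Ceq by metis
qed

lemma Kof_ne:
  assumes t2: "2 \<le> t" and disjXL: "X \<inter> L = {}" and Lne: "L \<noteq> {}"
    and E: "E \<in> FS \<omega> t X L (X \<union> L \<union> U)"
  shows "Kof t X L U E \<noteq> {}"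
proof
  assume K0: "Kof t X L U E = {}"
  let ?R = "remain E X (X \<union> L \<union> U) (t - 2)"
  have ev: "evap_time E X (X \<union> L \<union> U) t" and lay: "layer E X (X \<union> L \<union> U) t = L"
    and cliqQ: "is_clique E (X \<union> L)"
    using E unfolding FS_def by blast+
  have Rt1: "remain E X (X \<union> L \<union> U) (t - 1) = X \<union> L" using evap_basic[OF ev lay] t2 by auto
  have "?R \<inter> U = {}" using Kof_RM[of E X L U t] K0 by simp
  then have s1: "?R \<subseteq> X \<union> L" using remain_subset[of E X "X \<union> L \<union> U" "t - 2"] by blast
  have st: "Suc (t - 2) = t - 1" using t2 by simp
  have s2: "X \<union> L \<subseteq> ?R" using Rt1 remain_antimono[of "t - 2" "t - 1" E X "X \<union> L \<union> U"] by simp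
  have R2: "?R = X \<union> L" using s1 s2 by (rule subset_antisym)
  obtain v where v: "v \<in> L" using Lne by blast
  have sv: "simplicial E (X \<union> L) v" using simplicial_clique[OF cliqQ] v by blast
  have vX: "v \<notin> X" using v disjXL by blast
  have "v \<in> remain E X (X \<union> L \<union> U) (t - 1)" using Rt1 v by blast
  then have "v \<in> remain E X (X \<union> L \<union> U) (Suc (t - 2))" unfolding st .
  then have "\<not> simplicial E ?R v" using remain_Suc_notin vX by blast
  then show False using sv R2 by simp
qed

lemma A_global:
  assumes t2: "2 \<le> t" and disjXL: "X \<inter> L = {}" and disjU: "U \<inter> (X \<union> L) = {}" and Lne: "L \<noteq> {}"
    and E: "E \<in> FS \<omega> t X L (X \<union> L \<union> U)"
  shows "Kof t X L U E \<subseteq> U \<and> Kof t X L U E \<noteq> {}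
    \<and> restr E (X \<union> L \<union> Kof t X L U E) \<in> FT \<omega> t X L (X \<union> L \<union> Kof t X L U E)
    \<and> restr E (X \<union> L \<union> (U - Kof t X L U E)) \<in> GS \<omega> (t - 2) (X \<union> L) X (X \<union> L \<union> (U - Kof t X L U E))
    \<and> E = restr E (X \<union> L \<union> Kof t X L U E) \<union> restr E (X \<union> L \<union> (U - Kof t X L U E))"
proof -
  define K where "K = Kof t X L U E"
  define M where "M = U - K"
  have KU: "K \<subseteq> U" unfolding K_def by (rule Kof_sub)
  have VU: "X \<union> L \<union> K \<union> M = X \<union> L \<union> U" using KU unfolding M_def by blast
  have KM: "K \<union> M = U" using KU unfolding M_def by blast
  have Ee: "E \<subseteq> edges (X \<union> L \<union> U)" using E unfolding FS_def by blast
  have cliqQ: "is_clique E (X \<union> L)" using E unfolding FS_def by blast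
  interpret S: split_setting E X L K M
  proof
    show "X \<inter> L = {}" by (rule disjXL)
    show "K \<inter> (X \<union> L) = {}" using disjU KU by blast
    show "M \<inter> (X \<union> L) = {}" using disjU unfolding M_def by blast
    show "K \<inter> M = {}" unfolding M_def by blast
    show "E \<subseteq> edges (X \<union> L \<union> K \<union> M)" using Ee unfolding VU .
    show "\<And>u w. u \<in> K \<Longrightarrow> w \<in> M \<Longrightarrow> \<not> adj E u w" unfolding K_def M_def by (rule Kof_nocross)
    show "is_clique E (X \<union> L)" by (rule cliqQ)
  qed
  have ER: "E \<in> FS \<omega> t X L (X \<union> L \<union> K \<union> M)" using E unfolding VU .
  have RM: "remain E X (X \<union> L \<union> K \<union> M) (t - 2) \<inter> M = {}"
    unfolding VU unfolding M_def K_def by (rule Kof_RM)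
  have Kcomp: "\<And>C. C \<in> components E (K \<union> M) \<Longrightarrow> C \<subseteq> K \<Longrightarrow> C \<inter> remain E X (X \<union> L \<union> K \<union> M) (t - 2) \<noteq> {}"
    unfolding VU KM unfolding K_def by (rule Kof_comp)
  have Kne: "K \<noteq> {}" unfolding K_def by (rule Kof_ne[OF t2 disjXL Lne E])
  have A1: "restr E (X \<union> L \<union> K) \<in> FT \<omega> t X L (X \<union> L \<union> K)"
    by (rule S.dirA(1)[OF t2 ER Lne RM Kcomp Kne])
  have A2: "restr E (X \<union> L \<union> M) \<in> GS \<omega> (t - 2) (X \<union> L) X (X \<union> L \<union> M)"
    by (rule S.dirA(2)[OF t2 ER Lne RM Kcomp Kne])
  have A3: "E = restr E (X \<union> L \<union> K) \<union> restr E (X \<union> L \<union> M)" by (rule S.E_split)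
  show ?thesis using KU Kne A1 A2 A3 unfolding K_def M_def by blast
qed

lemma edge_clique_in:
  assumes e: "e \<in> E2" and E2: "E2 \<subseteq> edges B" and eA: "e \<subseteq> A" and AB: "A \<inter> B \<subseteq> S"
    and cl: "is_clique E1 S"
  shows "e \<in> E1"
proof -
  obtain u v where uv: "e = {u, v}" "u \<noteq> v" "u \<in> B" "v \<in> B" using e E2 unfolding edges_def by blast
  then have "u \<in> S" "v \<in> S" using eA AB by auto
  then have "adj E1 u v" using cl uv(2) unfolding is_clique_def by blast
  then show ?thesis using uv unfolding adj_def by simp
qed

lemma B_global:
  assumes t2: "2 \<le> t" and disjXL: "X \<inter> L = {}" and disjU: "U \<inter> (X \<union> L) = {}" and Lne: "L \<noteq> {}"
    and finQ: "finite (X \<union> L)" and KU: "K \<subseteq> U"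
    and F1: "E1 \<in> FT \<omega> t X L (X \<union> L \<union> K)"
    and G2: "E2 \<in> GS \<omega> (t - 2) (X \<union> L) X (X \<union> L \<union> (U - K))"
  shows "E1 \<union> E2 \<in> FS \<omega> t X L (X \<union> L \<union> U) \<and> Kof t X L U (E1 \<union> E2) = K
    \<and> restr (E1 \<union> E2) (X \<union> L \<union> K) = E1 \<and> restr (E1 \<union> E2) (X \<union> L \<union> (U - K)) = E2"
proof -
  define M where "M = U - K"
  define E where "E = E1 \<union> E2"
  have VU: "X \<union> L \<union> K \<union> M = X \<union> L \<union> U" using KU unfolding M_def by blast
  have KM: "K \<union> M = U" using KU unfolding M_def by blast
  have G2': "E2 \<in> GS \<omega> (t - 2) (X \<union> L) X (X \<union> L \<union> M)" using G2 unfolding M_def .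
  have E1e: "E1 \<subseteq> edges (X \<union> L \<union> K)" and cl1: "is_clique E1 (X \<union> L)"
    using F1 unfolding FT_def FS_def by blast+
  have E2e: "E2 \<subseteq> edges (X \<union> L \<union> M)" and cl2: "is_clique E2 (X \<union> L)"
    using G2' unfolding GS_def by blast+
  have dK: "K \<inter> (X \<union> L) = {}" using disjU KU by blast
  have dM: "M \<inter> (X \<union> L) = {}" using disjU unfolding M_def by blast
  have dKM: "K \<inter> M = {}" unfolding M_def by blast
  have r1: "restr E (X \<union> L \<union> K) = E1"
  proof
    show "restr E (X \<union> L \<union> K) \<subseteq> E1"
    proof
      fix e assume "e \<in> restr E (X \<union> L \<union> K)"
      then have e: "e \<in> E" "e \<subseteq> X \<union> L \<union> K" unfolding restr_def by auto
      show "e \<in> E1"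
      proof (cases "e \<in> E1")
        case False
        then have "e \<in> E2" using e unfolding E_def by blast
        moreover have "(X \<union> L \<union> K) \<inter> (X \<union> L \<union> M) \<subseteq> X \<union> L" using dKM by blast
        ultimately show ?thesis using edge_clique_in[OF _ E2e e(2) _ cl1] by blast
      qed
    qed
    show "E1 \<subseteq> restr E (X \<union> L \<union> K)" using E1e unfolding restr_def E_def edges_def by blast
  qed
  have r2: "restr E (X \<union> L \<union> M) = E2"
  proof
    show "restr E (X \<union> L \<union> M) \<subseteq> E2"
    proof
      fix e assume "e \<in> restr E (X \<union> L \<union> M)"
      then have e: "e \<in> E" "e \<subseteq> X \<union> L \<union> M" unfolding restr_def by auto
      show "e \<in> E2"
      proof (cases "e \<in> E2")
        case False
        then have "e \<in> E1" using e unfolding E_def by blast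
        moreover have "(X \<union> L \<union> M) \<inter> (X \<union> L \<union> K) \<subseteq> X \<union> L" using dKM by blast
        ultimately show ?thesis using edge_clique_in[OF _ E1e e(2) _ cl2] by blast
      qed
    qed
    show "E2 \<subseteq> restr E (X \<union> L \<union> M)" using E2e unfolding restr_def E_def edges_def by blast
  qed
  have Ee: "E \<subseteq> edges (X \<union> L \<union> K \<union> M)"
    using E1e E2e edges_mono[of "X \<union> L \<union> K" "X \<union> L \<union> K \<union> M"] edges_mono[of "X \<union> L \<union> M" "X \<union> L \<union> K \<union> M"]
    unfolding E_def by blast
  have nocross: "\<And>u w. u \<in> K \<Longrightarrow> w \<in> M \<Longrightarrow> \<not> adj E u w"
  proof
    fix u w assume u: "u \<in> K" and w: "w \<in> M" and a: "adj E u w"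
    then consider "adj E1 u w" | "adj E2 u w" unfolding E_def by (auto simp: adj_Un)
    then show False
    proof cases
      case 1 then have "w \<in> X \<union> L \<union> K" using adj_in_edges[OF E1e] by blast
      then show False using w dM dKM by blast
    next
      case 2 then have "u \<in> X \<union> L \<union> M" using adj_in_edges[OF E2e] by blast
      then show False using u dK dKM by blast
    qed
  qed
  have cliqQ: "is_clique E (X \<union> L)" using cl1 unfolding is_clique_def E_def by (auto simp: adj_Un)
  interpret S: split_setting E X L K M
  proof
    show "X \<inter> L = {}" by (rule disjXL)
    show "K \<inter> (X \<union> L) = {}" by (rule dK)
    show "M \<inter> (X \<union> L) = {}" by (rule dM)
    show "K \<inter> M = {}" by (rule dKM)
    show "E \<subseteq> edges (X \<union> L \<union> K \<union> M)" by (rule Ee)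
    show "\<And>u w. u \<in> K \<Longrightarrow> w \<in> M \<Longrightarrow> \<not> adj E u w" by (rule nocross)
    show "is_clique E (X \<union> L)" by (rule cliqQ)
  qed
  have F1': "restr E (X \<union> L \<union> K) \<in> FT \<omega> t X L (X \<union> L \<union> K)" using F1 unfolding r1 .
  have G2'': "restr E (X \<union> L \<union> M) \<in> GS \<omega> (t - 2) (X \<union> L) X (X \<union> L \<union> M)" using G2' unfolding r2 .
  note B = S.dirB[OF t2 F1' G2'' Lne finQ]
  have FS: "E \<in> FS \<omega> t X L (X \<union> L \<union> U)" using B(1) unfolding VU .
  have RM: "remain E X (X \<union> L \<union> U) (t - 2) \<inter> M = {}" using B(2) unfolding VU .
  have Kc: "\<And>C. C \<in> components E U \<Longrightarrow> C \<subseteq> K \<Longrightarrow> C \<inter> remain E X (X \<union> L \<union> U) (t - 2) \<noteq> {}"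
    using B(3) unfolding VU KM .
  have Kof: "Kof t X L U E = K"
  proof
    show "Kof t X L U E \<subseteq> K"
    proof
      fix u assume u: "u \<in> Kof t X L U E"
      have uU: "u \<in> U" using u Kof_sub by blast
      show "u \<in> K"
      proof (rule ccontr)
        assume "u \<notin> K"
        then have uM: "u \<in> M" using uU unfolding M_def by blast
        have "component E U u = component E2 M u" using S.comp_M[OF uM] unfolding KM r2 .
        then have "component E U u \<subseteq> M" using component_subset by metis
        then show False using Kof_memD[OF u] RM by blast
      qed
    qed
    show "K \<subseteq> Kof t X L U E"
    proof
      fix u assume uK: "u \<in> K"
      have uU: "u \<in> U" using uK KU by blast
      have C: "component E U u \<in> components E U" using uU unfolding components_def by blast
      have "component E U u = component E1 K u" using S.comp_K[OF uK] unfolding KM r1 .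
      then have "component E U u \<subseteq> K" using component_subset by metis
      then have "component E U u \<inter> remain E X (X \<union> L \<union> U) (t - 2) \<noteq> {}" using Kc C by blast
      then show "u \<in> Kof t X L U E" using Kof_memI[OF C component_self[OF uU]] by blast
    qed
  qed
  show ?thesis using FS Kof r1 r2 unfolding E_def M_def by blast
qed

lemma card_decomp:
  assumes t2: "2 \<le> t" and disjXL: "X \<inter> L = {}" and disjU: "U \<inter> (X \<union> L) = {}" and Lne: "L \<noteq> {}"
    and finQ: "finite (X \<union> L)" and finU: "finite U"
  shows "card (FS \<omega> t X L (X \<union> L \<union> U)) =
    (\<Sum>K\<in>{K. K \<subseteq> U \<and> K \<noteq> {}}. card (FT \<omega> t X L (X \<union> L \<union> K)) * card (GS \<omega> (t - 2) (X \<union> L) X (X \<union> L \<union> (U - K))))"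
proof -
  let ?P = "{K. K \<subseteq> U \<and> K \<noteq> {}}"
  let ?B = "\<lambda>K. FT \<omega> t X L (X \<union> L \<union> K) \<times> GS \<omega> (t - 2) (X \<union> L) X (X \<union> L \<union> (U - K))"
  let ?S = "Sigma ?P ?B"
  let ?psi = "\<lambda>p. fst (snd p) \<union> snd (snd p)"
  have finP: "finite ?P" using finU by simp
  have finB: "\<And>K. K \<in> ?P \<Longrightarrow> finite (?B K)"
  proof -
    fix K assume "K \<in> ?P"
    then have "finite K" using finU finite_subset by blast
    then show "finite (?B K)" using finQ finU by (simp add: finite_FT finite_GS)
  qed
  have bij: "bij_betw ?psi ?S (FS \<omega> t X L (X \<union> L \<union> U))"
  proof (rule bij_betw_imageI)
    show "inj_on ?psi ?S"
    proof (rule inj_onI)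
      fix p p' assume p: "p \<in> ?S" and p': "p' \<in> ?S" and eq: "?psi p = ?psi p'"
      obtain K E1 E2 where pe: "p = (K, E1, E2)" by (cases p) auto
      obtain K' E1' E2' where pe': "p' = (K', E1', E2')" by (cases p') auto
      have b: "Kof t X L U (E1 \<union> E2) = K \<and> restr (E1 \<union> E2) (X \<union> L \<union> K) = E1
          \<and> restr (E1 \<union> E2) (X \<union> L \<union> (U - K)) = E2"
        using B_global[OF t2 disjXL disjU Lne finQ, of K E1 \<omega> E2] p pe by auto
      have b': "Kof t X L U (E1' \<union> E2') = K' \<and> restr (E1' \<union> E2') (X \<union> L \<union> K') = E1'
          \<and> restr (E1' \<union> E2') (X \<union> L \<union> (U - K')) = E2'"
        using B_global[OF t2 disjXL disjU Lne finQ, of K' E1' \<omega> E2'] p' pe' by auto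
      have e: "E1 \<union> E2 = E1' \<union> E2'" using eq pe pe' by simp
      then have "K = K'" using b b' by metis
      then show "p = p'" using b b' e pe pe' by metis
    qed
    show "?psi ` ?S = FS \<omega> t X L (X \<union> L \<union> U)"
    proof
      show "?psi ` ?S \<subseteq> FS \<omega> t X L (X \<union> L \<union> U)"
      proof
        fix E assume "E \<in> ?psi ` ?S"
        then obtain p where p: "p \<in> ?S" "E = ?psi p" by blast
        obtain K E1 E2 where pe: "p = (K, E1, E2)" by (cases p) auto
        have K: "K \<subseteq> U" "E1 \<in> FT \<omega> t X L (X \<union> L \<union> K)"
          "E2 \<in> GS \<omega> (t - 2) (X \<union> L) X (X \<union> L \<union> (U - K))" "E = E1 \<union> E2"
          using p unfolding pe by auto
        then show "E \<in> FS \<omega> t X L (X \<union> L \<union> U)"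
          using B_global[OF t2 disjXL disjU Lne finQ K(1-3)] by blast
      qed
      show "FS \<omega> t X L (X \<union> L \<union> U) \<subseteq> ?psi ` ?S"
      proof
        fix E assume E: "E \<in> FS \<omega> t X L (X \<union> L \<union> U)"
        note a = A_global[OF t2 disjXL disjU Lne E]
        let ?K = "Kof t X L U E"
        have a1: "?K \<subseteq> U" "?K \<noteq> {}" using a by blast+
        have a2: "restr E (X \<union> L \<union> ?K) \<in> FT \<omega> t X L (X \<union> L \<union> ?K)" using a by blast
        have a3: "restr E (X \<union> L \<union> (U - ?K)) \<in> GS \<omega> (t - 2) (X \<union> L) X (X \<union> L \<union> (U - ?K))" using a by blast
        have a4: "E = restr E (X \<union> L \<union> ?K) \<union> restr E (X \<union> L \<union> (U - ?K))" using a by blast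
        have "(?K, restr E (X \<union> L \<union> ?K), restr E (X \<union> L \<union> (U - ?K))) \<in> ?S"
          using a1 a2 a3 by blast
        moreover have "E = ?psi (?K, restr E (X \<union> L \<union> ?K), restr E (X \<union> L \<union> (U - ?K)))"
          using a4 by (simp only: fst_conv snd_conv)
        ultimately show "E \<in> ?psi ` ?S" by blast
      qed
    qed
  qed
  have "card (FS \<omega> t X L (X \<union> L \<union> U)) = card ?S" by (rule bij_betw_same_card[OF bij, symmetric])
  also have "\<dots> = (\<Sum>K\<in>?P. card (?B K))" by (rule card_SigmaI[OF finP]) (use finB in blast)
  also have "\<dots> = (\<Sum>K\<in>?P. card (FT \<omega> t X L (X \<union> L \<union> K)) * card (GS \<omega> (t - 2) (X \<union> L) X (X \<union> L \<union> (U - K))))"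
    by (rule sum.cong[OF refl], rule card_cartesian_product)
  finally show ?thesis .
qed

lemma relabel_bij:
  assumes finK: "finite K" and dK: "K \<inter> {1..n} = {}"
  shows "\<exists>h. bij_betw h {1..n + card K} ({1..n} \<union> K) \<and> (\<forall>q\<in>{1..n}. h q = q)"
proof -
  have "card {n+1..n + card K} = card K" by simp
  then obtain g where g: "bij_betw g {n+1..n + card K} K" using finite_same_card_bij finK by blast
  define h where "h v = (if v \<le> n then v else g v)" for v
  have b1: "bij_betw h {1..n} {1..n}" by (rule bij_betw_cong[THEN iffD2, of _ _ id]) (auto simp: h_def)
  have b2: "bij_betw h {n+1..n + card K} K" by (rule bij_betw_cong[THEN iffD2, OF _ g]) (auto simp: h_def)
  have "bij_betw h ({1..n} \<union> {n+1..n + card K}) ({1..n} \<union> K)"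
    by (rule bij_betw_combine[OF b1 b2]) (use dK in blast)
  moreover have "{1..n} \<union> {n+1..n + card K} = {1..n + card K}" by auto
  ultimately show ?thesis unfolding h_def by auto
qed

lemma sum_subsets:
  fixes f :: "nat \<Rightarrow> nat"
  assumes finU: "finite U"
  shows "(\<Sum>K\<in>{K. K \<subseteq> U \<and> K \<noteq> {}}. f (card K)) = (\<Sum>j=1..card U. (card U choose j) * f j)"
proof -
  let ?A = "\<lambda>j. {K. K \<subseteq> U \<and> card K = j}"
  have eq: "{K. K \<subseteq> U \<and> K \<noteq> {}} = (\<Union>j\<in>{1..card U}. ?A j)"
  proof (rule set_eqI, rule iffI)
    fix K assume "K \<in> {K. K \<subseteq> U \<and> K \<noteq> {}}"
    then have K: "K \<subseteq> U" "K \<noteq> {}" by auto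
    then have "finite K" using finU finite_subset by blast
    then have "card K \<noteq> 0" using K(2) by simp
    then have "1 \<le> card K" by simp
    moreover have "card K \<le> card U" by (rule card_mono[OF finU K(1)])
    ultimately show "K \<in> (\<Union>j\<in>{1..card U}. ?A j)" using K by auto
  next
    fix K assume "K \<in> (\<Union>j\<in>{1..card U}. ?A j)"
    then show "K \<in> {K. K \<subseteq> U \<and> K \<noteq> {}}" by auto
  qed
  have "(\<Sum>K\<in>{K. K \<subseteq> U \<and> K \<noteq> {}}. f (card K)) = (\<Sum>j\<in>{1..card U}. \<Sum>K\<in>?A j. f (card K))"
    unfolding eq
  proof (rule sum.UNION_disjoint)
    show "finite {1..card U}" by simp
    show "\<forall>j\<in>{1..card U}. finite (?A j)"
    proof
      fix j
      have "?A j \<subseteq> Pow U" by blast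
      then show "finite (?A j)" using finU finite_subset by blast
    qed
    show "\<forall>i\<in>{1..card U}. \<forall>j\<in>{1..card U}. i \<noteq> j \<longrightarrow> ?A i \<inter> ?A j = {}" by blast
  qed
  also have "\<dots> = (\<Sum>j\<in>{1..card U}. (card U choose j) * f j)"
  proof (rule sum.cong[OF refl])
    fix j assume "j \<in> {1..card U}"
    have "(\<Sum>K\<in>?A j. f (card K)) = (\<Sum>K\<in>?A j. f j)" by simp
    also have "\<dots> = card (?A j) * f j" by simp
    also have "card (?A j) = card U choose j" using n_subsets[OF finU] by simp
    finally show "(\<Sum>K\<in>?A j. f (card K)) = (card U choose j) * f j" .
  qed
  finally show ?thesis .
qed

lemma FT_edges: "E \<in> FT \<omega> t X L V \<Longrightarrow> E \<subseteq> edges V"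
  unfolding FT_def FS_def by blast

lemma GS_edges: "E \<in> GS \<omega> s Y Z V \<Longrightarrow> E \<subseteq> edges V"
  unfolding GS_def by blast

lemma card_FT_relabel:
  assumes finK: "finite K" and dK: "K \<inter> {1..x+l} = {}"
  shows "card (FT \<omega> t {1..x} {x+1..x+l} ({1..x} \<union> {x+1..x+l} \<union> K)) = ftilde_count \<omega> t x l (card K)"
proof -
  have Q: "{1..x} \<union> {x+1..x+l} = {1..x+l}" by auto
  obtain h where h: "bij_betw h {1..x+l + card K} ({1..x+l} \<union> K)" "\<forall>q\<in>{1..x+l}. h q = q"
    using relabel_bij[OF finK dK] by blast
  have "card (FT \<omega> t {1..x} {x+1..x+l} {1..x+l + card K}) = card (FT \<omega> t {1..x} {x+1..x+l} ({1..x+l} \<union> K))"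
  proof (rule card_transfer[where Q="{1..x} \<union> {x+1..x+l}", OF _ FT_edges h(1)])
    show "\<And>h V E. inj_on h V \<Longrightarrow> (\<And>q. q \<in> {1..x} \<union> {x+1..x+l} \<Longrightarrow> h q = q) \<Longrightarrow>
        {1..x} \<union> {x+1..x+l} \<subseteq> V \<Longrightarrow> E \<in> FT \<omega> t {1..x} {x+1..x+l} V \<Longrightarrow>
        imgE h E \<in> FT \<omega> t {1..x} {x+1..x+l} (h ` V)"
      by (rule FT_transfer)
    show "\<And>q. q \<in> {1..x} \<union> {x+1..x+l} \<Longrightarrow> h q = q" using h(2) Q by blast
    show "{1..x} \<union> {x+1..x+l} \<subseteq> {1..x+l + card K}" by auto
  qed
  then show ?thesis unfolding ftilde_count_FT Q by simp
qed

lemma card_GS_relabel: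
  assumes finK: "finite K" and dK: "K \<inter> {1..x+l} = {}"
  shows "card (GS \<omega> s ({1..x} \<union> {x+1..x+l}) {1..x} ({1..x} \<union> {x+1..x+l} \<union> K)) = g_count \<omega> s (x+l) (card K) x"
proof -
  have Q: "{1..x} \<union> {x+1..x+l} = {1..x+l}" by auto
  obtain h where h: "bij_betw h {1..x+l + card K} ({1..x+l} \<union> K)" "\<forall>q\<in>{1..x+l}. h q = q"
    using relabel_bij[OF finK dK] by blast
  have "card (GS \<omega> s {1..x+l} {1..x} {1..x+l + card K}) = card (GS \<omega> s {1..x+l} {1..x} ({1..x+l} \<union> K))"
  proof (rule card_transfer[where Q="{1..x+l}", OF _ GS_edges h(1)])
    show "\<And>h V E. inj_on h V \<Longrightarrow> (\<And>q. q \<in> {1..x+l} \<Longrightarrow> h q = q) \<Longrightarrow>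
        {1..x+l} \<subseteq> V \<Longrightarrow> E \<in> GS \<omega> s {1..x+l} {1..x} V \<Longrightarrow>
        imgE h E \<in> GS \<omega> s {1..x+l} {1..x} (h ` V)"
      by (rule GS_transfer)
    show "\<And>q. q \<in> {1..x+l} \<Longrightarrow> h q = q" using h(2) by blast
    show "{1..x+l} \<subseteq> {1..x+l + card K}" by auto
  qed
  then show ?thesis unfolding g_count_GS Q by simp
qed

theorem lemma3p2:
  fixes \<omega> t x l k :: nat
  assumes "\<omega> \<ge> 1" and "t \<ge> 2" and "l \<ge> 1"
  shows "f_count \<omega> t x l k =
    (\<Sum>k' = 1..k. (k choose k') * ftilde_count \<omega> t x l k' * g_count \<omega> (t - 2) (x + l) (k - k') x)"
proof -
  define X where "X = {1..x}"
  define L where "L = {x+1..x+l}"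
  define U where "U = {x+l+1..x+l+k}"
  have disjXL: "X \<inter> L = {}" unfolding X_def L_def by auto
  have disjU: "U \<inter> (X \<union> L) = {}" unfolding X_def L_def U_def by auto
  have Lne: "L \<noteq> {}" unfolding L_def using assms(3) by auto
  have finQ: "finite (X \<union> L)" unfolding X_def L_def by simp
  have finU: "finite U" unfolding U_def by simp
  have cardU: "card U = k" unfolding U_def by simp
  have V: "X \<union> L \<union> U = {1..x+l+k}" unfolding X_def L_def U_def by auto
  have QU: "\<And>K. K \<subseteq> U \<Longrightarrow> K \<inter> {1..x+l} = {}" unfolding U_def by auto
  have "f_count \<omega> t x l k = card (FS \<omega> t X L (X \<union> L \<union> U))"
    unfolding f_count_FS V unfolding X_def L_def ..
  also have "\<dots> = (\<Sum>K\<in>{K. K \<subseteq> U \<and> K \<noteq> {}}. card (FT \<omega> t X L (X \<union> L \<union> K))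
      * card (GS \<omega> (t - 2) (X \<union> L) X (X \<union> L \<union> (U - K))))"
    by (rule card_decomp[OF assms(2) disjXL disjU Lne finQ finU])
  also have "\<dots> = (\<Sum>K\<in>{K. K \<subseteq> U \<and> K \<noteq> {}}. ftilde_count \<omega> t x l (card K)
      * g_count \<omega> (t - 2) (x + l) (k - card K) x)"
  proof (rule sum.cong[OF refl])
    fix K assume "K \<in> {K. K \<subseteq> U \<and> K \<noteq> {}}"
    then have KU: "K \<subseteq> U" by blast
    have finK: "finite K" using KU finU finite_subset by blast
    have finM: "finite (U - K)" using finU by simp
    have cM: "card (U - K) = k - card K" using card_Diff_subset[OF finK KU] cardU by simp
    have "card (FT \<omega> t X L (X \<union> L \<union> K)) = ftilde_count \<omega> t x l (card K)"
      unfolding X_def L_def by (rule card_FT_relabel[OF finK QU[OF KU]])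
    moreover have "card (GS \<omega> (t - 2) (X \<union> L) X (X \<union> L \<union> (U - K))) = g_count \<omega> (t - 2) (x + l) (k - card K) x"
      unfolding X_def L_def cM[symmetric]
      by (rule card_GS_relabel[OF finM QU]) blast
    ultimately show "card (FT \<omega> t X L (X \<union> L \<union> K)) * card (GS \<omega> (t - 2) (X \<union> L) X (X \<union> L \<union> (U - K)))
        = ftilde_count \<omega> t x l (card K) * g_count \<omega> (t - 2) (x + l) (k - card K) x" by simp
  qed
  also have "\<dots> = (\<Sum>j=1..card U. (card U choose j) * (ftilde_count \<omega> t x l j * g_count \<omega> (t - 2) (x + l) (k - j) x))"
    by (rule sum_subsets[OF finU, where f="\<lambda>j. ftilde_count \<omega> t x l j * g_count \<omega> (t - 2) (x + l) (k - j) x"])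
  also have "\<dots> = (\<Sum>k' = 1..k. (k choose k') * ftilde_count \<omega> t x l k' * g_count \<omega> (t - 2) (x + l) (k - k') x)"
    unfolding cardU by (simp add: mult.assoc)
  finally show ?thesis .
qed

end
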